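(* Let $k\ge1$, $a_i,b_i,c_i\in\mathbb{C}$ ($1\le i\le k$) with $\prod_{j=1}^kc_j\neq0$ and $\prod_{j=1}^kb_j\neq0$, let $T(f)$ be the tridiagonal $k$-Toeplitz operator on $\ell^2(\mathbb{N})$ with symbol $f$, and let $\lambda\in\mathbb{C}\setminus\sigma_{ess}(T(f))$. If $\sum_{j=1}^k\operatorname{wind}(\lambda_j(\mathbb{T}),\lambda)<0$, then there exist an eigenvector $\mathbf{x}\in\ell^2$ of $T(f)$ with eigenvalue $\lambda$ and some $\rho<1$ such that $$\frac{|\mathbf{x}_j|}{\max_i|\mathbf{x}_i|}\le C\,\lceil j/k\rceil\,\rho^{\lceil j/k\rceil-1},\qquad j\ge1,$$ where $C>0$ is a constant depending only on $\lambda$ and $a_p,b_p,c_p$, $1\le p\le k$.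
   Context: The tridiagonal $k$-Toeplitz operator $T(f)$ on $\ell^2(\mathbb{N})$ has matrix entries $(i,i)=a_{p(i)}$, $(i,i+1)=b_{p(i)}$, $(i+1,i)=c_{p(i)}$, $p(i)=((i-1)\bmod k)+1$, all other entries zero. Its symbol is $f(z)=A_{-1}z^{-1}+A_0+A_1z$, where $A_0$ is the $k\times k$ tridiagonal matrix with diagonal $a_1,\dots,a_k$, superdiagonal $b_1,\dots,b_{k-1}$, subdiagonal $c_1,\dots,c_{k-1}$; $A_{-1}$ has single nonzero entry $b_k$ at $(k,1)$; $A_1$ has single nonzero entry $c_k$ at $(1,k)$. $\mathbb{T}$ is the unit circle. $\sigma_{ess}(T(f))$ is the set of $\lambda$ with $T(f)-\lambda I$ not Fredholm. With $\lambda_1(z),\dots,\lambda_k(z)$ the eigenvalues of $f(z)$, $\sum_j\operatorname{wind}(\lambda_j(\mathbb{T}),\lambda)$ denotes the winding number about $0$ of $z\mapsto\det(f(z)-\lambda I)=\prod_j(\lambda_j(z)-\lambda)$ as $z$ traverses $\mathbb{T}$ counterclockwise. *)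

theory Defs
  imports "HOL-Complex_Analysis.Complex_Analysis" "Jordan_Normal_Form.Determinant"
begin

text \<open>Sequences x :: nat => complex represent vectors indexed by 1,2,3,...:
  the paper's x_i is x (i - 1). The coefficients a, b, c are indexed 1..k as in the paper.\<close>

definition period_index :: "nat \<Rightarrow> nat \<Rightarrow> nat" where
  "period_index k n = (n mod k) + 1"   \<comment> \<open>p(i) for i = n + 1\<close>

text \<open>The tridiagonal k-Toeplitz operator T(f), acting on sequences (each row has finitely
  many nonzero entries, so the action is defined for every sequence).\<close>
definition ktoeplitz ::
  "nat \<Rightarrow> (nat \<Rightarrow> complex) \<Rightarrow> (nat \<Rightarrow> complex) \<Rightarrow> (nat \<Rightarrow> complex) \<Rightarrow>
   (nat \<Rightarrow> complex) \<Rightarrow> (nat \<Rightarrow> complex)" where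
  "ktoeplitz k a b c x = (\<lambda>n.
      (if n = 0 then 0 else c (period_index k (n - 1)) * x (n - 1))
      + a (period_index k n) * x n
      + b (period_index k n) * x (Suc n))"

definition is_l2 :: "(nat \<Rightarrow> complex) \<Rightarrow> bool" where
  "is_l2 x \<longleftrightarrow> summable (\<lambda>n. (cmod (x n))\<^sup>2)"

definition l2norm :: "(nat \<Rightarrow> complex) \<Rightarrow> real" where
  "l2norm x = sqrt (\<Sum>n. (cmod (x n))\<^sup>2)"

definition lin_comb :: "complex list \<Rightarrow> (nat \<Rightarrow> complex) list \<Rightarrow> (nat \<Rightarrow> complex)" where
  "lin_comb cs vs = (\<lambda>n. \<Sum>i<length vs. cs ! i * (vs ! i) n)"

definition fin_dim_set :: "(nat \<Rightarrow> complex) set \<Rightarrow> bool" where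
  "fin_dim_set S \<longleftrightarrow> (\<exists>vs. \<forall>x\<in>S. \<exists>cs. length cs = length vs \<and> x = lin_comb cs vs)"

definition l2_closed :: "(nat \<Rightarrow> complex) set \<Rightarrow> bool" where
  "l2_closed S \<longleftrightarrow> (\<forall>u w. (\<forall>m. u m \<in> S \<and> is_l2 (u m)) \<longrightarrow> is_l2 w \<longrightarrow>
       (\<lambda>m. l2norm (\<lambda>n. u m n - w n)) \<longlonglongrightarrow> 0 \<longrightarrow> w \<in> S)"

text \<open>Fredholm operator on l^2(N): finite-dimensional kernel, closed range,
  finite-codimensional range (range plus a finite-dimensional subspace of l^2 is all of l^2).\<close>
definition fredholm_l2 :: "((nat \<Rightarrow> complex) \<Rightarrow> (nat \<Rightarrow> complex)) \<Rightarrow> bool" where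
  "fredholm_l2 A \<longleftrightarrow>
     fin_dim_set {x. is_l2 x \<and> A x = (\<lambda>_. 0)} \<and>
     l2_closed (A ` {x. is_l2 x}) \<and>
     (\<exists>vs. (\<forall>v\<in>set vs. is_l2 v) \<and>
        (\<forall>y. is_l2 y \<longrightarrow> (\<exists>x cs. is_l2 x \<and> length cs = length vs \<and>
              y = (\<lambda>n. A x n + lin_comb cs vs n))))"

definition ess_spectrum_ktoeplitz ::
  "nat \<Rightarrow> (nat \<Rightarrow> complex) \<Rightarrow> (nat \<Rightarrow> complex) \<Rightarrow> (nat \<Rightarrow> complex) \<Rightarrow> complex set" where
  "ess_spectrum_ktoeplitz k a b c =
     {lam. \<not> fredholm_l2 (\<lambda>x n. ktoeplitz k a b c x n - lam * x n)}"

text \<open>The symbol f(z) = A_{-1} z^{-1} + A_0 + A_1 z as a k x k matrix (0-based entries: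
  the paper's entry (r,s) is entry (r-1,s-1) here).\<close>
definition symbol_mat ::
  "nat \<Rightarrow> (nat \<Rightarrow> complex) \<Rightarrow> (nat \<Rightarrow> complex) \<Rightarrow> (nat \<Rightarrow> complex) \<Rightarrow> complex \<Rightarrow> complex mat" where
  "symbol_mat k a b c z = mat k k (\<lambda>(r, s).
      (if r = s then a (r + 1) else 0)
    + (if s = r + 1 then b (r + 1) else 0)
    + (if r = s + 1 then c (s + 1) else 0)
    + (if r = k - 1 \<and> s = 0 then b k / z else 0)
    + (if r = 0 \<and> s = k - 1 then c k * z else 0))"

text \<open>Sum of winding numbers of the eigenvalue curves about lambda: winding number about 0
  of z |-> det(f(z) - lambda I), z running once counterclockwise over the unit circle.\<close>
definition total_winding ::
  "nat \<Rightarrow> (nat \<Rightarrow> complex) \<Rightarrow> (nat \<Rightarrow> complex) \<Rightarrow> (nat \<Rightarrow> complex) \<Rightarrow> complex \<Rightarrow> complex" where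
  "total_winding k a b c lam =
     winding_number (\<lambda>t. Determinant.det (symbol_mat k a b c (cis (2 * pi * t)) - lam \<cdot>\<^sub>m 1\<^sub>m k)) 0"

end

theory Submission
  imports Defs
begin



lemma rec_bound:
  fixes Y :: "nat \<Rightarrow> complex"
  assumes rec: "\<And>m. Y (Suc (Suc m)) = (\<mu>1+\<mu>2) * Y (Suc m) - \<mu>1*\<mu>2 * Y m"
    and h1: "cmod \<mu>1 \<le> \<rho>" and h2: "cmod \<mu>2 \<le> \<rho>" and rp: "\<rho> > 0"
  shows "cmod (Y m) \<le> (cmod (Y 0) + cmod (Y 1 - \<mu>2 * Y 0) / \<rho>) * (real m + 1) * \<rho> ^ m"
proof -
  define Z where "Z m = Y (Suc m) - \<mu>2 * Y m" for m
  have Zs: "Z (Suc m) = \<mu>1 * Z m" for m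
    unfolding Z_def using rec[of m] by (simp add: algebra_simps)
  have Zp: "Z m = \<mu>1 ^ m * Z 0" for m
    by (induction m) (auto simp: Zs)
  have Zb: "cmod (Z m) \<le> \<rho> ^ m * cmod (Z 0)" for m
  proof -
    have "cmod (Z m) = cmod \<mu>1 ^ m * cmod (Z 0)" by (simp add: Zp[of m] norm_mult norm_power)
    also have "\<dots> \<le> \<rho> ^ m * cmod (Z 0)"
      by (intro mult_right_mono power_mono h1) auto
    finally show ?thesis .
  qed
  have inv: "cmod (Y m) \<le> (cmod (Y 0) + real m * cmod (Z 0) / \<rho>) * \<rho> ^ m" for m
  proof (induction m)
    case 0 then show ?case by simp
  next
    case (Suc m)
    have "cmod (Y (Suc m)) = cmod (\<mu>2 * Y m + Z m)" by (simp add: Z_def)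
    also have "\<dots> \<le> cmod (\<mu>2 * Y m) + cmod (Z m)" by (rule norm_triangle_ineq)
    also have "\<dots> = cmod \<mu>2 * cmod (Y m) + cmod (Z m)" by (simp add: norm_mult)
    also have "\<dots> \<le> \<rho> * ((cmod (Y 0) + real m * cmod (Z 0) / \<rho>) * \<rho> ^ m) + \<rho> ^ m * cmod (Z 0)"
      by (intro add_mono mult_mono Suc Zb h2) (use rp in auto)
    also have "\<dots> = (cmod (Y 0) + real (Suc m) * cmod (Z 0) / \<rho>) * \<rho> ^ Suc m"
      using rp by (simp add: field_simps)
    finally show ?case .
  qed
  have "(cmod (Y 0) + real m * cmod (Z 0) / \<rho>) \<le> (cmod (Y 0) + cmod (Z 0) / \<rho>) * (real m + 1)"
    using rp by (simp add: field_simps)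
  hence "(cmod (Y 0) + real m * cmod (Z 0) / \<rho>) * \<rho> ^ m \<le> (cmod (Y 0) + cmod (Z 0) / \<rho>) * (real m + 1) * \<rho> ^ m"
    using rp by (intro mult_right_mono) auto
  with inv[of m] show ?thesis by (simp add: Z_def)
qed

lemma lin_geom_bound:
  fixes \<theta> :: real assumes "0 \<le> \<theta>" "\<theta> < 1"
  shows "(real m + 1) * \<theta> ^ m \<le> 1 / (1 - \<theta>)"
proof -
  have "(real m + 1) * \<theta> ^ m = (\<Sum>i<Suc m. \<theta> ^ m)" by simp
  also have "\<dots> \<le> (\<Sum>i<Suc m. \<theta> ^ i)"
    by (intro sum_mono power_decreasing) (use assms in auto)
  also have "\<dots> \<le> (\<Sum>i. \<theta> ^ i)"
    by (intro sum_le_suminf summable_geometric) (use assms in auto)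
  also have "\<dots> = 1 / (1 - \<theta>)" using suminf_geometric[of \<theta>] assms by simp
  finally show ?thesis .
qed

lemma sum_div_group:
  fixes f :: "nat \<Rightarrow> real" 
  shows "(\<Sum>n<N*k. f (n div k)) = real k * (\<Sum>m<N. f m)"
proof -
  have "(\<Sum>n<N*k. f (n div k)) = (\<Sum>m<N. \<Sum>n\<in>{m*k..<m*k+k}. f (n div k))"
    by (rule sum.nat_group[symmetric])
  also have "\<dots> = (\<Sum>m<N. real k * f m)"
  proof (rule sum.cong[OF refl])
    fix m
    have "(\<Sum>n\<in>{m*k..<m*k+k}. f (n div k)) = (\<Sum>n\<in>{m*k..<m*k+k}. f m)"
    proof (rule sum.cong[OF refl])
      fix n assume n: "n \<in> {m*k..<m*k+k}"
      have "k * m \<le> n" using n by (simp add: mult.commute)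
      moreover have "n < k * Suc m" using n by (simp add: mult.commute)
      ultimately have "n div k = m" by (rule div_nat_eqI)
      thus "f (n div k) = f m" by simp
    qed
    thus "(\<Sum>n\<in>{m*k..<m*k+k}. f (n div k)) = real k * f m" by simp
  qed
  also have "\<dots> = real k * (\<Sum>m<N. f m)" by (simp add: sum_distrib_left)
  finally show ?thesis .
qed

lemma summable_div:
  fixes f :: "nat \<Rightarrow> real"
  assumes "summable f" "\<And>n. 0 \<le> f n" "k \<ge> 1"
  shows "summable (\<lambda>n. f (n div k))"
proof (rule summableI_nonneg_bounded[where x = "real k * suminf f"])
  fix N
  have "(\<Sum>n<N. f (n div k)) \<le> (\<Sum>n<N*k. f (n div k))"
    by (intro sum_mono2) (use assms in auto)
  also have "\<dots> = real k * (\<Sum>m<N. f m)" by (rule sum_div_group)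
  also have "\<dots> \<le> real k * suminf f"
    by (intro mult_left_mono sum_le_suminf) (use assms in auto)
  finally show "(\<Sum>n<N. f (n div k)) \<le> real k * suminf f" .
qed (use assms in auto)

lemma l2_bdd:
  assumes "is_l2 x"
  shows "cmod (x n) \<le> sqrt (\<Sum>i. (cmod (x i))\<^sup>2)"
proof -
  have "(cmod (x n))\<^sup>2 \<le> (\<Sum>i\<in>{n}. (cmod (x i))\<^sup>2)" by simp
  also have "\<dots> \<le> (\<Sum>i. (cmod (x i))\<^sup>2)"
    by (intro sum_le_suminf) (use assms in \<open>auto simp: is_l2_def\<close>)
  finally show ?thesis by (simp add: real_le_rsqrt)
qed

lemma ceil_div:
  assumes "k \<ge> 1"
  shows "\<lceil>real (Suc n) / real k\<rceil> = int (n div k + 1)"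
proof (rule ceiling_unique)
  have h1: "n div k * k + n mod k = n" by simp
  have h2: "n mod k < k" using assms by simp
  have kp: "real k > 0" using assms by simp
  have "n div k * k < Suc n" using h1 by linarith
  hence "real (n div k * k) < real (Suc n)" by (simp only: of_nat_less_iff)
  hence "real (n div k) * real k < real (Suc n)" by simp
  hence "real (n div k) < real (Suc n) / real k" using kp by (simp add: pos_less_divide_eq)
  thus "real_of_int (int (n div k + 1)) - 1 < real (Suc n) / real k" by simp
  have "(n div k + 1) * k = n div k * k + k" by simp
  hence "Suc n \<le> (n div k + 1) * k" using h1 h2 by linarith
  hence "real (Suc n) \<le> real ((n div k + 1) * k)" by (simp only: of_nat_le_iff)
  hence "real (Suc n) \<le> real (n div k + 1) * real k" by (simp only: of_nat_mult)
  hence "real (Suc n) / real k \<le> real (n div k + 1)" using kp by (simp add: pos_divide_le_eq)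
  thus "real (Suc n) / real k \<le> real_of_int (int (n div k + 1))" by simp
qed

locale tp =
  fixes k :: nat and a b c :: "nat \<Rightarrow> complex" and lam :: complex
  assumes k1: "k \<ge> 1" and bnz: "\<And>j. 1 \<le> j \<Longrightarrow> j \<le> k \<Longrightarrow> b j \<noteq> 0"
begin

abbreviation "P \<equiv> period_index k"

lemma bP: "b (P n) \<noteq> 0"
  using k1 by (intro bnz) (auto simp: period_index_def Suc_le_eq)

lemma P0: "P 0 = 1" by (simp add: period_index_def)

lemma P_add: "s mod k = 0 \<Longrightarrow> P (n + s) = P n"
  by (simp add: period_index_def mod_add_eq[symmetric])

fun sol :: "complex \<Rightarrow> complex \<Rightarrow> nat \<Rightarrow> complex" where
  "sol p q 0 = p"
| "sol p q (Suc 0) = q"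
| "sol p q (Suc (Suc n)) = - (c (P n) * sol p q n + (a (P (Suc n)) - lam) * sol p q (Suc n)) / b (P (Suc n))"

lemma row_eq:
  "ktoeplitz k a b c x (Suc n) = lam * x (Suc n) \<longleftrightarrow>
   x (Suc (Suc n)) = - (c (P n) * x n + (a (P (Suc n)) - lam) * x (Suc n)) / b (P (Suc n))"
proof -
  define B where "B = b (P (Suc n))"
  define Cc where "Cc = c (P n) * x n + (a (P (Suc n)) - lam) * x (Suc n)"
  define L where "L = c (P n) * x n + a (P (Suc n)) * x (Suc n) + B * x (Suc (Suc n))"
  have B: "B \<noteq> 0" using bP[of "Suc n"] by (simp add: B_def)
  have Le: "ktoeplitz k a b c x (Suc n) = L"
    by (simp add: ktoeplitz_def B_def L_def)
  have e1: "(x (Suc (Suc n)) = - Cc / B) \<longleftrightarrow> (x (Suc (Suc n)) * B = - Cc)"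
    using B by (auto simp: field_simps)
  have e2: "x (Suc (Suc n)) * B + Cc = L - lam * x (Suc n)"
    by (simp add: Cc_def L_def algebra_simps)
  have "(L = lam * x (Suc n)) = (L - lam * x (Suc n) = 0)" by simp
  also have "\<dots> = (x (Suc (Suc n)) * B + Cc = 0)" by (simp only: e2)
  also have "\<dots> = (x (Suc (Suc n)) * B = - Cc)" by (simp add: eq_neg_iff_add_eq_0)
  also have "\<dots> = (x (Suc (Suc n)) = - Cc / B)" using e1 by simp
  finally have ch: "(L = lam * x (Suc n)) = (x (Suc (Suc n)) = - Cc / B)" .
  have R: "(x (Suc (Suc n)) = - (c (P n) * x n + (a (P (Suc n)) - lam) * x (Suc n)) / b (P (Suc n))) = (x (Suc (Suc n)) = - Cc / B)"
    unfolding Cc_def B_def ..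
  show ?thesis by (simp only: Le R ch)
qed

lemma sol_row: "ktoeplitz k a b c (sol p q) (Suc n) = lam * sol p q (Suc n)"
  by (simp add: row_eq)

lemma sol_unique:
  assumes "\<And>n. ktoeplitz k a b c x (Suc n) = lam * x (Suc n)"
  shows "sol (x 0) (x 1) n = x n"
proof -
  have "sol (x 0) (x 1) n = x n \<and> sol (x 0) (x 1) (Suc n) = x (Suc n)" for n
  proof (induction n)
    case 0 then show ?case by simp
  next
    case (Suc n) then show ?case using assms[of n] by (simp add: row_eq)
  qed
  thus ?thesis by simp
qed

lemma sol_lin: "sol p q n = p * sol 1 0 n + q * sol 0 1 n"
proof (induction p q n rule: sol.induct)
  case (3 p q n)
  show ?case by (simp only: sol.simps 3) (simp add: divide_inverse algebra_simps)
qed auto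

lemma sol_shift:
  assumes "s mod k = 0"
  shows "sol p q (n + s) = sol (sol p q s) (sol p q (Suc s)) n"
proof -
  have "sol p q (n + s) = sol (sol p q s) (sol p q (Suc s)) n \<and>
        sol p q (Suc n + s) = sol (sol p q s) (sol p q (Suc s)) (Suc n)" for n
  proof (induction n)
    case 0 then show ?case by simp
  next
    case (Suc n)
    have e: "Suc (Suc n) + s = Suc (Suc (n + s))" by simp
    have "P (n + s) = P n" "P (Suc (n + s)) = P (Suc n)"
      using P_add[OF assms, of n] P_add[OF assms, of "Suc n"] by auto
    then show ?case using Suc by (simp only: e sol.simps) simp
  qed
  thus ?thesis by simp
qed

definition "m11 = sol 1 0 k"
definition "m12 = sol 0 1 k"
definition "m21 = sol 1 0 (Suc k)"
definition "m22 = sol 0 1 (Suc k)"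
definition "tr = m11 + m22"
definition "dt = m11 * m22 - m12 * m21"

lemma step1: "sol p q (Suc m * k) = m11 * sol p q (m*k) + m12 * sol p q (Suc (m*k))"
proof -
  have "sol p q (Suc m * k) = sol p q (k + m * k)" by (simp add: add.commute)
  also have "\<dots> = sol (sol p q (m*k)) (sol p q (Suc (m*k))) k" by (rule sol_shift) simp
  finally show ?thesis using sol_lin[of "sol p q (m*k)" "sol p q (Suc (m*k))" k] by (simp add: m11_def m12_def mult.commute)
qed

lemma step2: "sol p q (Suc (Suc m * k)) = m21 * sol p q (m*k) + m22 * sol p q (Suc (m*k))"
proof -
  have "sol p q (Suc (Suc m * k)) = sol p q (Suc k + m * k)" by (simp add: add.commute)
  also have "\<dots> = sol (sol p q (m*k)) (sol p q (Suc (m*k))) (Suc k)" by (rule sol_shift) simp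
  finally show ?thesis using sol_lin[of "sol p q (m*k)" "sol p q (Suc (m*k))" "Suc k"] by (simp add: m21_def m22_def mult.commute)
qed

lemma block_sol: "sol p q (m*k + r) = sol p q (m*k) * sol 1 0 r + sol p q (Suc (m*k)) * sol 0 1 r"
proof -
  have "sol p q (m*k + r) = sol p q (r + m*k)" by (simp add: add.commute)
  also have "\<dots> = sol (sol p q (m*k)) (sol p q (Suc (m*k))) r" by (rule sol_shift) simp
  finally show ?thesis using sol_lin[of "sol p q (m*k)" "sol p q (Suc (m*k))" r] by simp
qed

lemma block_rec: "sol p q (Suc (Suc m) * k + r) = tr * sol p q (Suc m * k + r) - dt * sol p q (m * k + r)"
proof -
  define A where "A m = sol p q (m*k)" for m
  define B where "B m = sol p q (Suc (m*k))" for m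
  have A1: "A (Suc m) = m11 * A m + m12 * B m" for m unfolding A_def B_def by (rule step1)
  have B1: "B (Suc m) = m21 * A m + m22 * B m" for m unfolding A_def B_def by (rule step2)
  have A2: "A (Suc (Suc m)) = tr * A (Suc m) - dt * A m"
    unfolding A1[of "Suc m"] B1[of m] A1[of m] tr_def dt_def by (simp add: algebra_simps)
  have B2: "B (Suc (Suc m)) = tr * B (Suc m) - dt * B m"
    unfolding B1[of "Suc m"] A1[of m] B1[of m] tr_def dt_def by (simp add: algebra_simps)
  have e2: "sol p q (Suc (Suc m) * k + r) = A (Suc (Suc m)) * sol 1 0 r + B (Suc (Suc m)) * sol 0 1 r"
    unfolding A_def B_def by (rule block_sol)
  have e1: "sol p q (Suc m * k + r) = A (Suc m) * sol 1 0 r + B (Suc m) * sol 0 1 r"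
    unfolding A_def B_def by (rule block_sol)
  have e0: "sol p q (m * k + r) = A m * sol 1 0 r + B m * sol 0 1 r"
    unfolding A_def B_def by (rule block_sol)
  show ?thesis unfolding e2 e1 e0 A2 B2 by (simp add: algebra_simps)
qed

lemma roots_exist: "\<exists>\<mu>1 \<mu>2. tr = \<mu>1 + \<mu>2 \<and> dt = \<mu>1 * \<mu>2"
proof -
  define s where "s = csqrt (tr\<^sup>2 - 4 * dt)"
  have "s\<^sup>2 = tr\<^sup>2 - 4 * dt" unfolding s_def by simp
  hence "dt = ((tr + s)/2) * ((tr - s)/2)" by (simp add: field_simps power2_eq_square)
  moreover have "tr = (tr + s)/2 + (tr - s)/2" by (simp add: field_simps)
  ultimately show ?thesis by blast
qed

definition "sig = - (a 1 - lam) / b 1"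
definition "u = sol 1 sig"

lemma u_eig: "ktoeplitz k a b c u = (\<lambda>n. lam * u n)"
proof
  fix n show "ktoeplitz k a b c u n = lam * u n"
  proof (cases n)
    case 0
    have "b 1 \<noteq> 0" using bP[of 0] P0 by simp
    then show ?thesis using 0 by (simp add: ktoeplitz_def u_def sig_def P0 field_simps)
  next
    case (Suc m) then show ?thesis by (simp add: u_def sol_row)
  qed
qed

lemma u0: "u 0 = 1" by (simp add: u_def)

lemma decay:
  assumes "tr = \<mu>1 + \<mu>2" "dt = \<mu>1 * \<mu>2" "cmod \<mu>1 < 1" "cmod \<mu>2 < 1"
  shows "\<exists>C>0. \<exists>x \<rho>. is_l2 x \<and> x \<noteq> (\<lambda>_. 0) \<and> ktoeplitz k a b c x = (\<lambda>n. lam * x n) \<and>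
           0 \<le> \<rho> \<and> \<rho> < 1 \<and>
           (\<forall>j::nat. j \<ge> 1 \<longrightarrow>
              cmod (x (j - 1)) / (SUP i. cmod (x i))
                \<le> C * real_of_int \<lceil>real j / real k\<rceil> * \<rho> ^ (nat \<lceil>real j / real k\<rceil> - 1))"
proof -
  define \<rho> where "\<rho> = max (max (cmod \<mu>1) (cmod \<mu>2)) (1/2)"
  have rp: "0 < \<rho>" "\<rho> < 1" "cmod \<mu>1 \<le> \<rho>" "cmod \<mu>2 \<le> \<rho>" using assms by (auto simp: \<rho>_def)
  define Kr where "Kr r = cmod (u r) + cmod (u (k + r) - \<mu>2 * u r) / \<rho>" for r
  define K where "K = (\<Sum>r<k. Kr r) + 1"
  have Kr0: "Kr r \<ge> 0" for r using rp by (simp add: Kr_def)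
  have Kpos: "K > 0" unfolding K_def using Kr0 by (simp add: add_nonneg_pos sum_nonneg)
  have bnd_r: "cmod (u (m*k + r)) \<le> Kr r * (real m + 1) * \<rho> ^ m" for m r
  proof -
    define Y where "Y m = u (m*k + r)" for m
    have "\<And>m. Y (Suc (Suc m)) = (\<mu>1+\<mu>2) * Y (Suc m) - \<mu>1*\<mu>2 * Y m"
      unfolding Y_def u_def using block_rec assms(1,2) by simp
    from rec_bound[of Y \<mu>1 \<mu>2 \<rho> m, OF this rp(3,4,1)] show ?thesis by (simp add: Y_def Kr_def)
  qed
  have bnd: "cmod (u n) \<le> K * (real (n div k) + 1) * \<rho> ^ (n div k)" for n
  proof -
    have nk: "n = (n div k) * k + n mod k" by simp
    have "n mod k < k" using k1 by simp
    hence "Kr (n mod k) \<le> (\<Sum>r<k. Kr r)" 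
      by (intro member_le_sum) (use Kr0 in auto)
    hence "Kr (n mod k) \<le> K" by (simp add: K_def)
    hence "Kr (n mod k) * (real (n div k) + 1) * \<rho> ^ (n div k) \<le> K * (real (n div k) + 1) * \<rho> ^ (n div k)"
      using rp by (intro mult_right_mono) auto
    moreover have "cmod (u n) \<le> Kr (n mod k) * (real (n div k) + 1) * \<rho> ^ (n div k)"
      using bnd_r[of "n div k" "n mod k"] by simp
    ultimately show ?thesis by linarith
  qed
  define \<sigma> where "\<sigma> = sqrt \<rho>"
  have sp: "0 < \<sigma>" "\<sigma> < 1" "\<rho> = \<sigma> * \<sigma>" using rp by (auto simp: \<sigma>_def)
  have bnd2: "(real m + 1) * \<rho> ^ m \<le> \<sigma> ^ m / (1 - \<sigma>)" for m
  proof -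
    have "(real m + 1) * \<rho> ^ m = ((real m + 1) * \<sigma> ^ m) * \<sigma> ^ m" by (simp add: sp power_mult_distrib)
    also have "\<dots> \<le> (1 / (1 - \<sigma>)) * \<sigma> ^ m"
      by (intro mult_right_mono lin_geom_bound) (use sp in auto)
    finally show ?thesis by simp
  qed
  have l2: "is_l2 u"
    unfolding is_l2_def
  proof (rule summable_comparison_test')
    define f where "f m = (K / (1 - \<sigma>))\<^sup>2 * (\<sigma>\<^sup>2) ^ m" for m
    have "\<sigma> * \<sigma> < 1 * 1" by (rule mult_strict_mono) (use sp in auto)
    hence "norm (\<sigma>\<^sup>2) < 1" using sp by (simp add: power2_eq_square)
    hence "summable f" unfolding f_def
      by (intro summable_mult summable_geometric)
    thus "summable (\<lambda>n. f (n div k))" by (rule summable_div) (use k1 in \<open>auto simp: f_def\<close>)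
    fix n
    have "cmod (u n) \<le> K * (\<sigma> ^ (n div k) / (1 - \<sigma>))"
    proof -
      have "(real (n div k) + 1) * \<rho> ^ (n div k) \<le> \<sigma> ^ (n div k) / (1 - \<sigma>)" by (rule bnd2)
      hence "K * ((real (n div k) + 1) * \<rho> ^ (n div k)) \<le> K * (\<sigma> ^ (n div k) / (1 - \<sigma>))"
        using Kpos by (intro mult_left_mono) auto
      with bnd[of n] show ?thesis by (simp add: mult.assoc)
    qed
    hence "(cmod (u n))\<^sup>2 \<le> (K * (\<sigma> ^ (n div k) / (1 - \<sigma>)))\<^sup>2"
      by (intro power_mono) auto
    moreover have "f m = (K * (\<sigma> ^ m / (1 - \<sigma>)))\<^sup>2" for m
      unfolding f_def by (simp add: power2_eq_square power_mult_distrib field_simps)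
    ultimately show "norm ((cmod (u n))\<^sup>2) \<le> f (n div k)" by simp
  qed
  have bdd: "bdd_above (range (\<lambda>i. cmod (u i)))"
    using l2_bdd[OF l2] by (intro bdd_aboveI) auto
  have sup1: "(SUP i. cmod (u i)) \<ge> 1"
    using cSUP_upper[OF _ bdd, of 0] by (simp add: u0)
  show ?thesis
  proof (intro exI conjI allI impI)
    show "K > 0" by (rule Kpos)
    show "is_l2 u" by (rule l2)
    show "u \<noteq> (\<lambda>_. 0)" using u0 by auto
    show "ktoeplitz k a b c u = (\<lambda>n. lam * u n)" by (rule u_eig)
    show "0 \<le> \<rho>" "\<rho> < 1" using rp by auto
    fix j :: nat assume "j \<ge> 1"
    then obtain n where j: "j = Suc n" by (cases j) auto
    have ce: "\<lceil>real j / real k\<rceil> = int (n div k + 1)" using ceil_div[OF k1] j by simp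
    have ce1: "real_of_int \<lceil>real j / real k\<rceil> = real (n div k) + 1" by (simp add: ce)
    have ce2: "nat \<lceil>real j / real k\<rceil> - 1 = n div k" by (simp add: ce)
    have "cmod (u (j - 1)) / (SUP i. cmod (u i)) \<le> cmod (u n)"
      using sup1 j by (simp add: divide_le_eq) (metis mult_le_cancel_left1 norm_ge_zero order.trans mult_left_mono order_refl mult.comm_neutral)
    also have "\<dots> \<le> K * (real (n div k) + 1) * \<rho> ^ (n div k)" by (rule bnd)
    finally show "cmod (u (j - 1)) / (SUP i. cmod (u i))
                \<le> K * real_of_int \<lceil>real j / real k\<rceil> * \<rho> ^ (nat \<lceil>real j / real k\<rceil> - 1)"
      unfolding ce1 ce2 .
  qed
qed

end



lemma sq_sum_le: fixes x y :: real shows "(x + y)\<^sup>2 \<le> 2*x\<^sup>2 + 2*y\<^sup>2"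
proof -
  have "2*x\<^sup>2 + 2*y\<^sup>2 - (x+y)\<^sup>2 = (x - y)\<^sup>2" by (simp add: power2_eq_square algebra_simps)
  thus ?thesis by (metis diff_ge_0_iff_ge zero_le_power2)
qed

lemma l2_mono:
  assumes "\<And>n. cmod (f n) \<le> cmod (g n)" "is_l2 g" shows "is_l2 f"
  unfolding is_l2_def
proof (rule summable_comparison_test')
  show "summable (\<lambda>n. (cmod (g n))\<^sup>2)" using assms(2) by (simp add: is_l2_def)
  fix n show "norm ((cmod (f n))\<^sup>2) \<le> (cmod (g n))\<^sup>2" using assms(1)[of n] by (simp add: power_mono)
qed

lemma l2_add:
  assumes f: "is_l2 f" and g: "is_l2 g" shows "is_l2 (\<lambda>n. f n + g n)"
  unfolding is_l2_def
proof (rule summable_comparison_test')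
  show "summable (\<lambda>n. 2 * (cmod (f n))\<^sup>2 + 2 * (cmod (g n))\<^sup>2)"
    using f g unfolding is_l2_def by (intro summable_add summable_mult)
  fix n
  have "cmod (f n + g n) \<le> cmod (f n) + cmod (g n)" by (rule norm_triangle_ineq)
  hence "(cmod (f n + g n))\<^sup>2 \<le> (cmod (f n) + cmod (g n))\<^sup>2" by (intro power_mono) auto
  also have "\<dots> \<le> 2 * (cmod (f n))\<^sup>2 + 2 * (cmod (g n))\<^sup>2" by (rule sq_sum_le)
  finally show "norm ((cmod (f n + g n))\<^sup>2) \<le> 2 * (cmod (f n))\<^sup>2 + 2 * (cmod (g n))\<^sup>2" by simp
qed

lemma l2_scale:
  assumes f: "is_l2 f" shows "is_l2 (\<lambda>n. z * f n)"
proof -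
  have "summable (\<lambda>n. (cmod z)\<^sup>2 * (cmod (f n))\<^sup>2)" using f unfolding is_l2_def by (rule summable_mult)
  thus ?thesis unfolding is_l2_def by (simp add: norm_mult power_mult_distrib)
qed

lemma l2_shift: assumes "is_l2 f" shows "is_l2 (\<lambda>n. f (Suc n))"
  using assms summable_Suc_iff[where f = "\<lambda>n. (cmod (f n))\<^sup>2"] unfolding is_l2_def by simp

lemma l2_shift_iff: "is_l2 (\<lambda>n. f (Suc n)) \<longleftrightarrow> is_l2 f"
  unfolding is_l2_def using summable_Suc_iff[where f = "\<lambda>n. (cmod (f n))\<^sup>2"] by simp

lemma l2_tendsto: assumes "is_l2 f" shows "f \<longlonglongrightarrow> 0"
proof -
  have "(\<lambda>n. (cmod (f n))\<^sup>2) \<longlonglongrightarrow> 0" using assms unfolding is_l2_def by (rule summable_LIMSEQ_zero)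
  hence "(\<lambda>n. sqrt ((cmod (f n))\<^sup>2)) \<longlonglongrightarrow> sqrt 0" by (rule tendsto_real_sqrt)
  hence "(\<lambda>n. cmod (f n)) \<longlonglongrightarrow> 0" by simp
  thus ?thesis by (simp add: tendsto_norm_zero_iff)
qed

lemma l2_reindex:
  assumes "is_l2 x" "k \<ge> (1::nat)" shows "is_l2 (\<lambda>m. x (m*k + r))"
proof -
  have "inj (\<lambda>m. m*k + r)" using assms(2) by (intro injI) simp
  from summable_reindex[OF assms(1)[unfolded is_l2_def] this]
  show ?thesis unfolding is_l2_def by (simp add: o_def)
qed

lemma l2_fin: assumes "\<And>n. n \<ge> N \<Longrightarrow> f n = 0" shows "is_l2 f"
proof -
  have "summable (\<lambda>n. (cmod (f (n + N)))\<^sup>2)" using assms by simp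
  thus ?thesis unfolding is_l2_def using summable_iff_shift[where f = "\<lambda>n. (cmod (f n))\<^sup>2"] by simp
qed

lemma not_l2_g:
  assumes "\<And>m. cmod (X m) = sqrt (inverse (real (Suc m))) * C" "C > 0"
  shows "\<not> is_l2 X"
proof
  assume "is_l2 X"
  hence "summable (\<lambda>m. (cmod (X m))\<^sup>2)" by (simp add: is_l2_def)
  hence "summable (\<lambda>m. inverse (C\<^sup>2) * (cmod (X m))\<^sup>2)" by (rule summable_mult)
  moreover have "inverse (C\<^sup>2) * (cmod (X m))\<^sup>2 = inverse (real (Suc m))" for m
    using assms by (simp add: power_mult_distrib field_simps)
  ultimately have "summable (\<lambda>m. inverse (real (Suc m)))" by simp
  hence "summable (\<lambda>n. inverse (real n))" by (subst summable_Suc_iff[symmetric]) simp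
  thus False using not_summable_harmonic by blast
qed

context tp begin

definition "Aop x = (\<lambda>n. ktoeplitz k a b c x n - lam * x n)"

lemma Aop_diff: "Aop (\<lambda>n. f n - g n) n = Aop f n - Aop g n"
  by (simp add: Aop_def ktoeplitz_def algebra_simps)

lemma Aop_Suc: "Aop x (Suc n) = c (P n) * x n + (a (P (Suc n)) - lam) * x (Suc n) + b (P (Suc n)) * x (Suc (Suc n))"
  by (simp add: Aop_def ktoeplitz_def algebra_simps)

lemma Aop_0: "Aop x 0 = (a 1 - lam) * x 0 + b 1 * x 1"
  by (simp add: Aop_def ktoeplitz_def P0 algebra_simps)

lemma sol_Aop: "Aop (sol p q) (Suc n) = 0"
  using sol_row by (simp add: Aop_def)

lemma b1: "b 1 \<noteq> 0" using bP[of 0] by (simp add: P0)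

lemma ker_u:
  assumes "Aop z = (\<lambda>_. 0)"
  shows "z n = z 0 * u n"
proof -
  have "ktoeplitz k a b c z (Suc n) = lam * z (Suc n)" for n
    using fun_cong[OF assms, of "Suc n"] by (simp add: Aop_def)
  hence s: "sol (z 0) (z 1) n = z n" by (rule sol_unique)
  have "(a 1 - lam) * z 0 + b 1 * z 1 = 0" using fun_cong[OF assms, of 0] by (simp add: Aop_0)
  hence z1: "z 1 = sig * z 0" using b1 by (simp add: sig_def field_simps)
  have "z n = z 0 * sol 1 0 n + sig * z 0 * sol 0 1 n" using s sol_lin[of "z 0" "z 1" n] z1 by simp
  also have "\<dots> = z 0 * u n" by (simp add: u_def sol_lin[of 1 sig n] algebra_simps)
  finally show ?thesis .
qed

lemma P_in: "P n \<in> {1..k}" using k1 by (auto simp: period_index_def Suc_le_eq)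

definition "Kc = (\<Sum>j\<in>{1..k}. cmod (c j))"
definition "Kb = (\<Sum>j\<in>{1..k}. cmod (b j))"

lemma cP: "cmod (c (P n)) \<le> Kc" unfolding Kc_def by (rule member_le_sum) (use P_in in auto)
lemma bPK: "cmod (b (P n)) \<le> Kb" unfolding Kb_def by (rule member_le_sum) (use P_in in auto)
lemma Kc0: "Kc \<ge> 0" unfolding Kc_def by (simp add: sum_nonneg)
lemma Kb0: "Kb \<ge> 0" unfolding Kb_def by (simp add: sum_nonneg)

lemma eigvec:
  assumes h: "\<mu>*\<mu> - tr*\<mu> + dt = 0"
  shows "\<exists>p q. (p \<noteq> 0 \<or> q \<noteq> 0) \<and> m11*p + m12*q = \<mu>*p \<and> m21*p + m22*q = \<mu>*q"
proof (cases "m12 \<noteq> 0 \<or> \<mu> \<noteq> m11")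
  case True
  have "\<mu>*(\<mu> - m11) - (m21*m12 + m22*(\<mu> - m11)) = \<mu>*\<mu> - tr*\<mu> + dt"
    by (simp add: tr_def dt_def algebra_simps)
  hence "m21*m12 + m22*(\<mu> - m11) = \<mu>*(\<mu> - m11)" using h by simp
  moreover have "m11*m12 + m12*(\<mu> - m11) = \<mu>*m12" by (simp add: algebra_simps)
  ultimately show ?thesis using True by (intro exI[of _ m12] exI[of _ "\<mu> - m11"]) auto
next
  case False
  hence f: "m12 = 0" "\<mu> = m11" by auto
  show ?thesis
  proof (cases "m21 \<noteq> 0 \<or> \<mu> \<noteq> m22")
    case True
    show ?thesis using True f
      by (intro exI[of _ "\<mu> - m22"] exI[of _ m21]) (auto simp: algebra_simps)
  next
    case False
    thus ?thesis using f by (intro exI[of _ 1] exI[of _ 0]) auto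
  qed
qed

lemma eig_root:
  assumes "p \<noteq> 0 \<or> q \<noteq> 0" "m11*p + m12*q = w*p" "m21*p + m22*q = w*q"
  shows "w*w - tr*w + dt = 0"
proof -
  define D where "D = w*w - tr*w + dt"
  have "D * p = (m22 - w) * (m11*p + m12*q - w*p) - m12 * (m21*p + m22*q - w*q)"
    by (simp add: D_def tr_def dt_def algebra_simps)
  hence "D * p = 0" using assms by simp
  moreover have "D * q = (m11 - w) * (m21*p + m22*q - w*q) - m21 * (m11*p + m12*q - w*p)"
    by (simp add: D_def tr_def dt_def algebra_simps)
  hence "D * q = 0" using assms by simp
  ultimately show ?thesis using assms(1) by (auto simp: D_def)
qed

lemma bloch_shift:
  assumes "m11*p + m12*q = w*p" "m21*p + m22*q = w*q"
  shows "sol p q (n + k) = w * sol p q n"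
proof -
  have "sol p q (n + k) = sol (sol p q k) (sol p q (Suc k)) n" by (rule sol_shift) simp
  also have "sol p q k = w * p" using assms(1) sol_lin[of p q k] by (simp add: m11_def m12_def mult.commute)
  also have "sol p q (Suc k) = w * q" using assms(2) sol_lin[of p q "Suc k"] by (simp add: m21_def m22_def mult.commute)
  also have "sol (w*p) (w*q) n = w * sol p q n"
    using sol_lin[of "w*p" "w*q" n] sol_lin[of p q n] by (simp add: algebra_simps)
  finally show ?thesis .
qed

lemma bloch_block:
  assumes "m11*p + m12*q = w*p" "m21*p + m22*q = w*q"
  shows "sol p q (m*k + n) = w^m * sol p q n"
proof (induction m)
  case 0 then show ?case by simp
next
  case (Suc m)
  have "sol p q (Suc m * k + n) = sol p q ((m*k + n) + k)" by (simp add: algebra_simps)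
  also have "\<dots> = w * sol p q (m*k + n)" by (rule bloch_shift[OF assms])
  finally show ?case using Suc by simp
qed

lemma div_at_top: "filterlim (\<lambda>n. n div k) at_top sequentially"
  unfolding filterlim_at_top eventually_sequentially
proof (intro allI exI[of _ "_ * k"] impI)
  fix Z n :: nat assume "Z * k \<le> n"
  hence "Z * k div k \<le> n div k" by (rule div_le_mono)
  thus "Z \<le> n div k" using k1 by simp
qed


lemma ess_iff: "lam \<in> ess_spectrum_ktoeplitz k a b c \<longleftrightarrow> \<not> fredholm_l2 Aop"
proof -
  have "(\<lambda>x n. ktoeplitz k a b c x n - lam * x n) = Aop" by (intro ext) (simp add: Aop_def)
  thus ?thesis by (simp add: ess_spectrum_ktoeplitz_def)
qed

lemma nonfred:
  assumes trd: "tr = \<mu> + \<nu>" "dt = \<mu> * \<nu>" and mu1: "cmod \<mu> = 1"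
  shows "\<not> fredholm_l2 Aop"
proof
  assume fr: "fredholm_l2 Aop"
  have "\<mu>*\<mu> - tr*\<mu> + dt = 0" using trd by (simp add: algebra_simps)
  then obtain p q where pq: "p \<noteq> 0 \<or> q \<noteq> 0" and e1: "m11*p + m12*q = \<mu>*p" and e2: "m21*p + m22*q = \<mu>*q"
    using eigvec by blast
  define \<phi> where "\<phi> = sol p q"
  have \<phi>blk: "\<phi> (m*k + n) = \<mu>^m * \<phi> n" for m n unfolding \<phi>_def by (rule bloch_block[OF e1 e2])
  have \<phi>row: "Aop \<phi> (Suc n) = 0" for n unfolding \<phi>_def by (rule sol_Aop)
  obtain r0 where r0: "r0 < k" "\<phi> r0 \<noteq> 0"
  proof (cases "p = 0")
    case False then show ?thesis using that[of 0] k1 by (simp add: \<phi>_def)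
  next
    case True
    hence q: "q \<noteq> 0" using pq by simp
    have "k \<noteq> 1"
    proof
      assume "k = 1"
      hence "\<phi> 1 = \<mu> * \<phi> 0" using \<phi>blk[of 1 0] by simp
      thus False using True q by (simp add: \<phi>_def)
    qed
    hence "1 < k" using k1 by simp
    then show ?thesis using that[of 1] q by (simp add: \<phi>_def)
  qed
  define K\<phi> where "K\<phi> = (\<Sum>r<k. cmod (\<phi> r))"
  have \<phi>bnd: "cmod (\<phi> n) \<le> K\<phi>" for n
  proof -
    have "\<phi> n = \<mu>^(n div k) * \<phi> (n mod k)" using \<phi>blk[of "n div k" "n mod k"] by simp
    hence "cmod (\<phi> n) = cmod (\<phi> (n mod k))" using mu1 by (simp add: norm_mult norm_power)
    also have "\<dots> \<le> K\<phi>" unfolding K\<phi>_def by (rule member_le_sum) (use k1 in auto)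
    finally show ?thesis .
  qed
  have K\<phi>0: "K\<phi> \<ge> 0" unfolding K\<phi>_def by (simp add: sum_nonneg)
  define g where "g m = sqrt (inverse (real (Suc m)))" for m
  have g0: "0 \<le> g m" for m by (simp add: g_def)
  have gmono: "g (Suc m) \<le> g m" for m unfolding g_def
    by (intro real_sqrt_le_mono le_imp_inverse_le) auto
  have gle1: "g m \<le> 1" for m unfolding g_def by (simp add: inverse_le_1_iff)
  have glim: "g \<longlonglongrightarrow> 0"
  proof -
    have "(\<lambda>m. sqrt (inverse (real (Suc m)))) \<longlonglongrightarrow> sqrt 0"
      by (rule tendsto_real_sqrt[OF LIMSEQ_inverse_real_of_nat])
    thus ?thesis by (simp add: g_def[abs_def])
  qed
  have gC: "(\<lambda>m. complex_of_real (g m)) \<longlonglongrightarrow> 0"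
    using tendsto_of_real[OF glim] by simp
  define \<delta> where "\<delta> m = g m - g (Suc m)" for m
  have \<delta>0: "0 \<le> \<delta> m" for m using gmono[of m] by (simp add: \<delta>_def)
  have \<delta>1: "\<delta> m \<le> 1" for m using g0[of "Suc m"] gle1[of m] by (simp add: \<delta>_def)
  have \<delta>sum: "summable \<delta>"
  proof (rule summableI_nonneg_bounded[where x = "g 0"])
    fix N
    have "(\<Sum>m<N. \<delta> m) = - (\<Sum>m<N. g (Suc m) - g m)" by (simp add: \<delta>_def sum_negf[symmetric])
    also have "\<dots> = g 0 - g N" by (simp add: sum_lessThan_telescope)
    finally show "(\<Sum>m<N. \<delta> m) \<le> g 0" using g0[of N] by simp
  qed (rule \<delta>0)
  have \<delta>sq: "summable (\<lambda>m. (\<delta> m)\<^sup>2)"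
  proof (rule summable_comparison_test'[OF \<delta>sum])
    fix m
    have "(\<delta> m)\<^sup>2 \<le> \<delta> m * 1" unfolding power2_eq_square by (intro mult_left_mono \<delta>1 \<delta>0)
    thus "norm ((\<delta> m)\<^sup>2) \<le> \<delta> m" by simp
  qed
  define G where "G n = complex_of_real (g (n div k))" for n
  define Y where "Y n = G n * \<phi> n" for n
  define w where "w = Aop Y"
  have gdiff: "cmod (G i - G (Suc i)) \<le> \<delta> (i div k)" for i
  proof (cases "Suc i mod k = 0")
    case True
    hence "Suc i div k = Suc (i div k)" by (simp add: div_Suc)
    hence "G i - G (Suc i) = complex_of_real (\<delta> (i div k))" by (simp add: G_def \<delta>_def)
    thus ?thesis using \<delta>0 by simp
  next
    case False
    hence "Suc i div k = i div k" by (simp add: div_Suc)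
    thus ?thesis using \<delta>0 by (simp add: G_def)
  qed
  have wSuc: "w (Suc i) = c (P i) * (G i - G (Suc i)) * \<phi> i + b (P (Suc i)) * (G (Suc (Suc i)) - G (Suc i)) * \<phi> (Suc (Suc i))" for i
  proof -
    have "w (Suc i) = w (Suc i) - G (Suc i) * Aop \<phi> (Suc i)" using \<phi>row by simp
    also have "\<dots> = c (P i) * (G i - G (Suc i)) * \<phi> i + b (P (Suc i)) * (G (Suc (Suc i)) - G (Suc i)) * \<phi> (Suc (Suc i))"
      unfolding w_def Aop_Suc Y_def by (simp add: algebra_simps)
    finally show ?thesis .
  qed
  define K1 where "K1 = (Kc + Kb) * K\<phi>"
  have wbnd: "cmod (w (Suc i)) \<le> K1 * (\<delta> (i div k) + \<delta> (Suc i div k))" for i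
  proof -
    have t1: "cmod (c (P i) * (G i - G (Suc i)) * \<phi> i) \<le> Kc * \<delta> (i div k) * K\<phi>"
      unfolding norm_mult by (intro mult_mono cP gdiff \<phi>bnd) (auto simp: Kc0 \<delta>0)
    have "cmod (G (Suc (Suc i)) - G (Suc i)) \<le> \<delta> (Suc i div k)"
      using gdiff[of "Suc i"] by (simp add: norm_minus_commute)
    hence t2: "cmod (b (P (Suc i)) * (G (Suc (Suc i)) - G (Suc i)) * \<phi> (Suc (Suc i))) \<le> Kb * \<delta> (Suc i div k) * K\<phi>"
      unfolding norm_mult by (intro mult_mono bPK \<phi>bnd) (auto simp: Kb0 \<delta>0)
    have "cmod (w (Suc i)) \<le> Kc * \<delta> (i div k) * K\<phi> + Kb * \<delta> (Suc i div k) * K\<phi>"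
      unfolding wSuc by (rule order.trans[OF norm_triangle_ineq add_mono[OF t1 t2]])
    also have "\<dots> \<le> K1 * (\<delta> (i div k) + \<delta> (Suc i div k))"
      unfolding K1_def using Kc0 Kb0 K\<phi>0 \<delta>0[of "i div k"] \<delta>0[of "Suc i div k"]
      by (simp add: algebra_simps add_mono mult_left_mono mult_right_mono mult_nonneg_nonneg)
    finally show ?thesis .
  qed
  have wl2: "is_l2 w"
  proof -
    have s1: "summable (\<lambda>i. (\<delta> (i div k))\<^sup>2)" by (rule summable_div[OF \<delta>sq]) (use k1 in auto)
    have s2: "summable (\<lambda>i. (\<delta> (Suc i div k))\<^sup>2)" using s1 by (subst summable_Suc_iff)
    have "is_l2 (\<lambda>i. w (Suc i))" unfolding is_l2_def
    proof (rule summable_comparison_test')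
      show "summable (\<lambda>i. 2 * K1\<^sup>2 * (\<delta> (i div k))\<^sup>2 + 2 * K1\<^sup>2 * (\<delta> (Suc i div k))\<^sup>2)"
        by (intro summable_add summable_mult s1 s2)
      fix i
      have "(cmod (w (Suc i)))\<^sup>2 \<le> (K1 * (\<delta> (i div k) + \<delta> (Suc i div k)))\<^sup>2"
        by (intro power_mono wbnd) auto
      also have "\<dots> = K1\<^sup>2 * (\<delta> (i div k) + \<delta> (Suc i div k))\<^sup>2" by (simp add: power_mult_distrib)
      also have "\<dots> \<le> K1\<^sup>2 * (2 * (\<delta> (i div k))\<^sup>2 + 2 * (\<delta> (Suc i div k))\<^sup>2)"
        by (intro mult_left_mono sq_sum_le) auto
      finally show "norm ((cmod (w (Suc i)))\<^sup>2) \<le> 2 * K1\<^sup>2 * (\<delta> (i div k))\<^sup>2 + 2 * K1\<^sup>2 * (\<delta> (Suc i div k))\<^sup>2"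
        by (simp add: algebra_simps)
    qed
    thus ?thesis by (simp add: l2_shift_iff)
  qed
  have Gnot: "\<not> is_l2 (\<lambda>m. complex_of_real (g m) * \<mu>^m * \<phi> r0)"
    by (rule not_l2_g[where C = "cmod (\<phi> r0)"]) (use r0 mu1 in \<open>auto simp: g_def norm_mult norm_power\<close>)
  have notin: "w \<notin> Aop ` {x. is_l2 x}"
  proof
    assume "w \<in> Aop ` {x. is_l2 x}"
    then obtain x where x: "is_l2 x" "Aop x = w" by auto
    define z where "z n = Y n - x n" for n
    have "Aop z = (\<lambda>_. 0)"
    proof
      fix n show "Aop z n = 0" unfolding z_def[abs_def] Aop_diff using x(2) by (simp add: w_def)
    qed
    hence zu: "z n = z 0 * u n" for n by (rule ker_u)
    define t where "t = z 0"
    have xe: "x n = Y n - t * u n" for n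
    proof -
      have "x n = Y n - z n" by (simp add: z_def)
      thus ?thesis using zu[of n] by (simp add: t_def)
    qed
    define X where "X m = x (m*k + r0)" for m
    have Xl2: "is_l2 X" unfolding X_def by (rule l2_reindex[OF x(1) k1])
    define U where "U m = u (m*k + r0)" for m
    have Urec: "U (Suc (Suc m)) = (\<mu>+\<nu>) * U (Suc m) - \<mu>*\<nu> * U m" for m
      using block_rec[of 1 sig m r0] trd by (simp add: U_def u_def)
    have dk: "(m*k + r0) div k = m" for m using r0(1) by simp
    have Yblk: "Y (m*k + r0) = complex_of_real (g m) * \<mu>^m * \<phi> r0" for m
      by (simp add: Y_def G_def dk \<phi>blk)
    have Xe: "X m = complex_of_real (g m) * \<mu>^m * \<phi> r0 - t * U m" for m
      using xe[of "m*k + r0"] Yblk[of m] by (simp add: X_def U_def)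
    define Z where "Z m = U (Suc m) - \<nu> * U m" for m
    have Zs: "Z (Suc m) = \<mu> * Z m" for m unfolding Z_def using Urec[of m] by (simp add: algebra_simps)
    have Zp: "Z m = \<mu>^m * Z 0" for m by (induction m) (auto simp: Zs)
    define D where "D m = X (Suc m) - \<nu> * X m" for m
    have Dl2: "is_l2 D" unfolding D_def
      using l2_add[OF l2_shift[OF Xl2] l2_scale[OF Xl2, of "- \<nu>"]] by simp
    define W where "W m = \<phi> r0 * (\<mu> * complex_of_real (g (Suc m)) - \<nu> * complex_of_real (g m)) - t * Z 0" for m
    have DW: "D m = \<mu>^m * W m" for m
    proof -
      have "D m = \<mu>^m * (\<phi> r0 * (\<mu> * complex_of_real (g (Suc m)) - \<nu> * complex_of_real (g m))) - t * Z m"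
        by (simp add: D_def Xe Z_def algebra_simps)
      thus ?thesis by (simp add: Zp[of m] W_def algebra_simps)
    qed
    have Wl2: "is_l2 W"
      by (rule l2_mono[OF _ Dl2]) (simp add: DW norm_mult norm_power mu1)
    have W0: "W \<longlonglongrightarrow> 0" by (rule l2_tendsto[OF Wl2])
    have "W \<longlonglongrightarrow> \<phi> r0 * (\<mu> * 0 - \<nu> * 0) - t * Z 0"
      unfolding W_def by (intro tendsto_intros gC LIMSEQ_Suc[OF gC])
    hence "0 = \<phi> r0 * (\<mu> * 0 - \<nu> * 0) - t * Z 0" by (rule LIMSEQ_unique[OF W0])
    hence tZ: "t * Z 0 = 0" by simp
    show False
    proof (cases "t = 0")
      case True
      hence "X = (\<lambda>m. complex_of_real (g m) * \<mu>^m * \<phi> r0)" using Xe by auto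
      with Xl2 Gnot show False by simp
    next
      case False
      hence Z0: "Z 0 = 0" using tZ by simp
      have Ug: "U m = \<nu>^m * U 0" for m
      proof (induction m)
        case (Suc m)
        have "Z m = 0" using Zp[of m] Z0 by simp
        thus ?case using Suc by (simp add: Z_def)
      qed simp
      show False
      proof (cases "t * U 0 = 0")
        case True
        have "t * U m = 0" for m using True by (auto simp: Ug[of m])
        hence "X = (\<lambda>m. complex_of_real (g m) * \<mu>^m * \<phi> r0)" by (intro ext) (simp add: Xe)
        with Xl2 Gnot show False by simp
      next
        case tU: False
        show False
        proof (cases "cmod \<nu> < 1")
          case True
          have "is_l2 (\<lambda>m. t * U m)" unfolding is_l2_def
          proof -
            have n2: "norm ((cmod \<nu>)\<^sup>2) < 1"
            proof -
              have "cmod \<nu> * cmod \<nu> < 1 * 1" by (rule mult_strict_mono) (use True in auto)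
              thus ?thesis by (simp add: power2_eq_square)
            qed
            have sm: "summable (\<lambda>m. (cmod (t * U 0))\<^sup>2 * ((cmod \<nu>)\<^sup>2) ^ m)"
              by (intro summable_mult summable_geometric n2)
            have eqm: "(cmod (t * U m))\<^sup>2 = (cmod (t * U 0))\<^sup>2 * ((cmod \<nu>)\<^sup>2) ^ m" for m
            proof -
              have "t * U m = \<nu>^m * (t * U 0)" by (simp add: Ug[of m])
              hence "cmod (t * U m) = cmod (\<nu>^m * (t * U 0))" by (simp only:)
              also have "\<dots> = cmod \<nu> ^ m * cmod (t * U 0)" by (simp only: norm_mult norm_power)
              finally have "cmod (t * U m) = cmod \<nu> ^ m * cmod (t * U 0)" .
              thus ?thesis by (simp add: power2_eq_square power_mult_distrib)
            qed
            have ex: "(\<lambda>m. (cmod (t * U m))\<^sup>2) = (\<lambda>m. (cmod (t * U 0))\<^sup>2 * ((cmod \<nu>)\<^sup>2) ^ m)"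
              by (rule ext) (rule eqm)
            show "summable (\<lambda>m. (cmod (t * U m))\<^sup>2)" unfolding ex by (rule sm)
          qed
          from l2_add[OF Xl2 this] have "is_l2 (\<lambda>m. complex_of_real (g m) * \<mu>^m * \<phi> r0)"
            by (simp add: Xe)
          with Gnot show False by simp
        next
          case False
          have le: "cmod (t * U 0) \<le> cmod (X m) + g m * cmod (\<phi> r0)" for m
          proof -
            have "1 \<le> cmod \<nu> ^ m" by (rule one_le_power) (use False in simp)
            hence "1 * cmod (t * U 0) \<le> cmod \<nu> ^ m * cmod (t * U 0)" by (rule mult_right_mono) simp
            hence "cmod (t * U 0) \<le> cmod \<nu> ^ m * cmod (t * U 0)" by simp
            also have "\<dots> = cmod (\<nu>^m * (t * U 0))" by (simp only: norm_mult norm_power)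
            also have "\<nu>^m * (t * U 0) = t * U m" by (simp add: Ug[of m])
            also have "t * U m = complex_of_real (g m) * \<mu>^m * \<phi> r0 - X m" by (simp add: Xe)
            also have "cmod \<dots> \<le> cmod (complex_of_real (g m) * \<mu>^m * \<phi> r0) + cmod (X m)"
              by (rule norm_triangle_ineq4)
            also have "\<dots> = cmod (X m) + g m * cmod (\<phi> r0)"
              using g0[of m] by (simp add: norm_mult norm_power mu1)
            finally show ?thesis .
          qed
          have "(\<lambda>m. cmod (X m) + g m * cmod (\<phi> r0)) \<longlonglongrightarrow> 0 + 0 * cmod (\<phi> r0)"
            by (intro tendsto_intros glim tendsto_norm_zero l2_tendsto Xl2)
          hence "cmod (t * U 0) \<le> 0 + 0 * cmod (\<phi> r0)"
            by (rule LIMSEQ_le_const) (use le in auto)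
          with tU show False by simp
        qed
      qed
    qed
  qed
  define YN where "YN N n = (if n < N then Y n else 0)" for N n
  have YNl2: "is_l2 (YN N)" for N by (rule l2_fin[of N]) (simp add: YN_def)
  have AYNl2: "is_l2 (Aop (YN N))" for N
  proof (rule l2_fin[of "Suc N"])
    fix n assume "Suc N \<le> n"
    then obtain m where "n = Suc m" "N \<le> m" by (cases n) auto
    thus "Aop (YN N) n = 0" by (simp add: Aop_Suc YN_def)
  qed
  have Ylim: "Y \<longlonglongrightarrow> 0"
  proof -
    have "(\<lambda>n. g (n div k)) \<longlonglongrightarrow> 0" by (rule filterlim_compose[OF glim div_at_top])
    hence "(\<lambda>n. g (n div k) * K\<phi>) \<longlonglongrightarrow> 0 * K\<phi>" by (intro tendsto_intros)
    hence conv: "(\<lambda>n. g (n div k) * K\<phi>) \<longlonglongrightarrow> 0" by simp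
    have bnd: "norm (Y n) \<le> g (n div k) * K\<phi>" for n
      unfolding Y_def G_def norm_mult using g0 by (simp add: \<phi>bnd mult_left_mono)
    show ?thesis
      by (rule Lim_null_comparison[where g = "\<lambda>n. g (n div k) * K\<phi>", OF always_eventually conv])
        (use bnd in auto)
  qed
  define S where "S N = (Kc * cmod (Y (N - 1)) + Kb * cmod (Y N))\<^sup>2" for N
  define E where "E N n = (if N \<le> n then cmod (w n) else 0) + (if n = N \<or> Suc n = N then Kc * cmod (Y (N - 1)) + Kb * cmod (Y N) else 0)" for N n
  have diffb: "cmod (Aop (YN N) n - w n) \<le> E N n" for N n
  proof (cases n)
    case 0
    have "Aop (YN N) 0 - w 0 = (a 1 - lam) * (YN N 0 - Y 0) + b 1 * (YN N 1 - Y 1)"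
      by (simp add: w_def Aop_0 algebra_simps)
    note d0 = this
    have b1K: "cmod (b 1) \<le> Kb" using bPK[of 0] by (simp add: P0)
    have E0: "E N 0 \<ge> 0" using Kc0 Kb0 by (simp add: E_def)
    consider "N = 0" | "N = 1" | "N \<ge> 2" by linarith
    then show ?thesis
    proof cases
      case 1
      hence "Aop (YN N) 0 - w 0 = - w 0" by (simp add: YN_def Aop_0)
      moreover have "cmod (w 0) \<le> E N 0" using 1 Kc0 Kb0 by (simp add: E_def)
      ultimately show ?thesis using 0 by simp
    next
      case 2
      hence "Aop (YN N) 0 - w 0 = - (b 1 * Y 1)" using d0 by (simp add: YN_def)
      hence "cmod (Aop (YN N) 0 - w 0) \<le> Kb * cmod (Y 1)" using b1K by (simp add: norm_mult mult_right_mono)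
      moreover have "Kb * cmod (Y 1) \<le> E N 0" using 2 Kc0 by (simp add: E_def)
      ultimately show ?thesis using 0 by simp
    next
      case 3
      hence "Aop (YN N) 0 - w 0 = 0" using d0 by (simp add: YN_def)
      thus ?thesis using E0 0 by simp
    qed
  next
    case (Suc m)
    have d: "Aop (YN N) (Suc m) - w (Suc m) = c (P m) * (YN N m - Y m) + (a (P (Suc m)) - lam) * (YN N (Suc m) - Y (Suc m)) + b (P (Suc m)) * (YN N (Suc (Suc m)) - Y (Suc (Suc m)))"
      by (simp add: w_def Aop_Suc algebra_simps)
    consider "Suc (Suc m) < N" | "Suc (Suc m) = N" | "Suc m = N" | "N \<le> m" by linarith
    then show ?thesis
    proof cases
      case 1 then show ?thesis using d Suc by (simp add: YN_def E_def)
    next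
      case 2
      hence "Aop (YN N) (Suc m) - w (Suc m) = - (b (P (Suc m)) * Y N)" using d by (simp add: YN_def)
      hence "cmod (Aop (YN N) (Suc m) - w (Suc m)) \<le> Kb * cmod (Y N)"
        by (simp add: norm_mult mult_right_mono bPK)
      moreover have "0 \<le> Kc * cmod (Y (N - 1))" using Kc0 by simp
      ultimately show ?thesis using 2 Suc by (simp add: E_def)
    next
      case 3
      have "Aop (YN N) (Suc m) = c (P m) * Y m" unfolding Aop_Suc YN_def using 3 by simp
      hence "Aop (YN N) (Suc m) - w (Suc m) = c (P m) * Y m - w (Suc m)" by simp
      hence e: "cmod (Aop (YN N) (Suc m) - w (Suc m)) = cmod (c (P m) * Y m - w (Suc m))" by simp
      have t: "cmod (c (P m) * Y m) \<le> Kc * cmod (Y m)" unfolding norm_mult by (rule mult_right_mono[OF cP]) simp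
      have "cmod (Aop (YN N) (Suc m) - w (Suc m)) \<le> Kc * cmod (Y m) + cmod (w (Suc m))"
        using e t norm_triangle_ineq4[of "c (P m) * Y m" "w (Suc m)"] by linarith
      moreover have "0 \<le> Kb * cmod (Y N)" using Kb0 by simp
      moreover have "N - Suc 0 = m" using 3 by simp
      ultimately show ?thesis using 3 Suc by (simp add: E_def)
    next
      case 4
      hence "Aop (YN N) (Suc m) - w (Suc m) = - w (Suc m)" by (simp add: YN_def Aop_Suc)
      thus ?thesis using 4 Suc Kb0 Kc0 by (simp add: E_def)
    qed
  qed
  define F where "F N n = (if N \<le> n then (cmod (w n))\<^sup>2 else 0)" for N n
  define H where "H N n = (if n = N then S N else 0) + (if n = N - 1 then S N else 0)" for N n
  have wsum: "summable (\<lambda>n. (cmod (w n))\<^sup>2)" using wl2 by (simp add: is_l2_def)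
  have Fsum: "summable (F N)" for N
    by (rule summable_comparison_test'[OF wsum]) (simp add: F_def)
  have Hs: "H N sums (S N + S N)" for N
    unfolding H_def[abs_def] by (intro sums_add sums_single)
  have E2: "(E N n)\<^sup>2 \<le> 2 * F N n + 2 * H N n" for N n
  proof -
    have "(E N n)\<^sup>2 \<le> 2 * (if N \<le> n then cmod (w n) else 0)\<^sup>2 + 2 * (if n = N \<or> Suc n = N then Kc * cmod (Y (N - 1)) + Kb * cmod (Y N) else 0)\<^sup>2"
      unfolding E_def by (rule sq_sum_le)
    also have "\<dots> \<le> 2 * F N n + 2 * H N n"
      using Kc0 Kb0 by (auto simp: F_def H_def S_def)
    finally show ?thesis .
  qed
  have Dsum: "summable (\<lambda>n. (cmod (Aop (YN N) n - w n))\<^sup>2)" for N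
    using l2_add[OF AYNl2 l2_scale[OF wl2, of "-1"]] by (simp add: is_l2_def)
  have Dbound: "(\<Sum>n. (cmod (Aop (YN N) n - w n))\<^sup>2) \<le> 2 * suminf (F N) + 4 * S N" for N
  proof -
    have "(\<Sum>n. (cmod (Aop (YN N) n - w n))\<^sup>2) \<le> (\<Sum>n. 2 * F N n + 2 * H N n)"
    proof (rule suminf_le)
      fix n
      have "(cmod (Aop (YN N) n - w n))\<^sup>2 \<le> (E N n)\<^sup>2" by (intro power_mono diffb) auto
      thus "(cmod (Aop (YN N) n - w n))\<^sup>2 \<le> 2 * F N n + 2 * H N n" using E2[of N n] by linarith
    next
      show "summable (\<lambda>n. 2 * F N n + 2 * H N n)"
        by (intro summable_add summable_mult Fsum sums_summable[OF Hs])
    qed (rule Dsum)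
    also have "\<dots> = (\<Sum>n. 2 * F N n) + (\<Sum>n. 2 * H N n)"
      by (rule suminf_add[symmetric]) (intro summable_mult Fsum sums_summable[OF Hs])+
    also have "(\<Sum>n. 2 * F N n) = 2 * suminf (F N)" by (rule suminf_mult[OF Fsum])
    also have "(\<Sum>n. 2 * H N n) = 2 * (S N + S N)" by (rule sums_unique[symmetric]) (rule sums_mult[OF Hs])
    finally show ?thesis by simp
  qed
  have Flim: "(\<lambda>N. suminf (F N)) \<longlonglongrightarrow> 0"
  proof -
    have "suminf (F N) = (\<Sum>n. (cmod (w n))\<^sup>2) - (\<Sum>n<N. (cmod (w n))\<^sup>2)" for N
    proof -
      have ex: "(\<lambda>n. (cmod (w n))\<^sup>2) = (\<lambda>n. F N n + (if n < N then (cmod (w n))\<^sup>2 else 0))"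
        by (auto simp: F_def)
      have sf: "summable (\<lambda>n. if n < N then (cmod (w n))\<^sup>2 else 0)"
        by (rule summable_finite[of "{..<N}"]) auto
      have "(\<Sum>n. (cmod (w n))\<^sup>2) = (\<Sum>n. F N n + (if n < N then (cmod (w n))\<^sup>2 else 0))"
        by (subst ex) (rule refl)
      also have "\<dots> = suminf (F N) + (\<Sum>n. (if n < N then (cmod (w n))\<^sup>2 else 0))"
        by (rule suminf_add[OF Fsum sf, symmetric])
      also have "(\<Sum>n. (if n < N then (cmod (w n))\<^sup>2 else 0)) = (\<Sum>n<N. (cmod (w n))\<^sup>2)"
        by (subst suminf_finite[of "{..<N}"]) auto
      finally show ?thesis by simp
    qed
    moreover have "(\<lambda>N. (\<Sum>n. (cmod (w n))\<^sup>2) - (\<Sum>n<N. (cmod (w n))\<^sup>2)) \<longlonglongrightarrow> (\<Sum>n. (cmod (w n))\<^sup>2) - (\<Sum>n. (cmod (w n))\<^sup>2)"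
      by (intro tendsto_intros summable_LIMSEQ wsum)
    ultimately show ?thesis by simp
  qed
  have Slim: "S \<longlonglongrightarrow> 0"
  proof -
    have Ym: "(\<lambda>N. Y (N - 1)) \<longlonglongrightarrow> 0"
      by (rule filterlim_compose[OF Ylim]) (rule filterlim_minus_const_nat_at_top)
    have "S \<longlonglongrightarrow> (Kc * norm (0::complex) + Kb * norm (0::complex))\<^sup>2"
      unfolding S_def[abs_def] by (intro tendsto_intros Ylim Ym)
    thus ?thesis by simp
  qed
  have lim: "(\<lambda>N. l2norm (\<lambda>n. Aop (YN N) n - w n)) \<longlonglongrightarrow> 0"
  proof (rule tendsto_sandwich[where f = "\<lambda>_. 0" and h = "\<lambda>N. sqrt (2 * suminf (F N) + 4 * S N)"])
    show "\<forall>\<^sub>F N in sequentially. 0 \<le> l2norm (\<lambda>n. Aop (YN N) n - w n)"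
      unfolding l2norm_def by (intro always_eventually allI real_sqrt_ge_zero suminf_nonneg Dsum) simp
    show "\<forall>\<^sub>F N in sequentially. l2norm (\<lambda>n. Aop (YN N) n - w n) \<le> sqrt (2 * suminf (F N) + 4 * S N)"
      using Dbound by (simp add: l2norm_def)
    have "(\<lambda>N. sqrt (2 * suminf (F N) + 4 * S N)) \<longlonglongrightarrow> sqrt (2 * 0 + 4 * 0)"
      by (intro tendsto_intros Flim Slim)
    thus "(\<lambda>N. sqrt (2 * suminf (F N) + 4 * S N)) \<longlonglongrightarrow> 0" by simp
  qed simp
  have "l2_closed (Aop ` {x. is_l2 x})" using fr by (simp add: fredholm_l2_def)
  hence "w \<in> Aop ` {x. is_l2 x}"
    unfolding l2_closed_def
    by (rule allE[of _ "\<lambda>N. Aop (YN N)"], elim allE[of _ w]) (use YNl2 AYNl2 wl2 lim in blast)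
  with notin show False by simp
qed
end



lemma frac3:
  fixes A B C Z :: complex assumes "A \<noteq> 0" "B \<noteq> 0" "C \<noteq> 0"
  shows "1/B + Z/C - 1/A = (A*C + Z*A*B - B*C)/(A*(B*C))"
  using assms by (simp add: field_simps)

lemma wind_lemma:
  fixes X Y Z r :: complex and G :: "complex \<Rightarrow> complex"
  assumes Gf: "\<And>z. z \<noteq> 0 \<Longrightarrow> G z = X + Y/z + Z*z"
    and nz: "\<And>z. cmod z = 1 \<Longrightarrow> G z \<noteq> 0"
    and r0: "r \<noteq> 0" and r1: "cmod r < 1" and Gr: "G r = 0"
  shows "Re (winding_number (\<lambda>t. G (cis (2*pi*t))) 0) \<ge> 0"
proof -
  define h where "h z = X + Y/z + Z*z" for z
  define \<gamma> where "\<gamma> = circlepath 0 1"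
  have pi\<gamma>: "path_image \<gamma> = sphere 0 1" by (simp add: \<gamma>_def)
  have cp: "circlepath 0 1 t = cis (2*pi*t)" for t
    by (simp add: circlepath cis_conv_exp algebra_simps)
  have eqf: "(\<lambda>t. G (cis (2*pi*t))) = h \<circ> \<gamma>"
  proof
    fix t
    have "cis (2*pi*t) \<noteq> 0" by simp
    thus "G (cis (2*pi*t)) = (h \<circ> \<gamma>) t" by (simp add: \<gamma>_def cp Gf h_def)
  qed
  have hG: "h z = G z" if "z \<noteq> 0" for z using Gf[OF that] by (simp add: h_def)
  have sph: "cmod w = 1" if "w \<in> path_image \<gamma>" for w using that by (simp add: pi\<gamma>)
  have hnz: "h w \<noteq> 0" if "w \<in> path_image \<gamma>" for w
  proof -
    have "w \<noteq> 0" using sph[OF that] by auto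
    thus ?thesis using nz[OF sph[OF that]] hG by simp
  qed
  have hol: "h holomorphic_on (- {0})" unfolding h_def by (intro holomorphic_intros) auto
  have ana: "h analytic_on (- {0})" using hol by (simp add: analytic_on_open open_Compl)
  have sub: "path_image \<gamma> \<subseteq> - {0}" using sph by force
  have vp: "valid_path \<gamma>" by (simp add: \<gamma>_def)
  have vph: "valid_path (h \<circ> \<gamma>)" by (rule valid_path_compose_analytic[OF vp ana sub])
  have n0: "0 \<notin> path_image (h \<circ> \<gamma>)" using hnz by (auto simp: path_image_compose)
  have der: "deriv h w = Z - Y / w\<^sup>2" if "w \<noteq> 0" for w
  proof -
    have "(h has_field_derivative (- Y / w\<^sup>2 + Z)) (at w)"
      unfolding h_def using that
      by (auto intro!: derivative_eq_intros simp: power2_eq_square field_simps)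
    thus ?thesis by (auto dest: DERIV_imp_deriv)
  qed
  define \<beta> where "\<beta> = X + Z * r"
  have Yr: "Y = - X * r - Z * r * r"
  proof -
    have "r * G r = Y + X * r + Z * r * r" using Gf[OF r0] r0 by (simp add: field_simps)
    hence e: "Y + X * r + Z * r * r = 0" using Gr by simp
    have "Y = (Y + X * r + Z * r * r) - X * r - Z * r * r" by simp
    thus ?thesis using e by simp
  qed
  have fac: "w * h w = (w - r) * (Z * w + \<beta>)" if "w \<noteq> 0" for w
    using that by (simp add: h_def \<beta>_def Yr field_simps)
  have wr: "w \<noteq> r" if "w \<in> path_image \<gamma>" for w using sph[OF that] r1 by auto
  have w0: "w \<noteq> 0" if "w \<in> path_image \<gamma>" for w using sph[OF that] by auto
  have zb: "Z * w + \<beta> \<noteq> 0" if "w \<in> path_image \<gamma>" for w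
    using fac[OF w0[OF that]] hnz[OF that] w0[OF that] by auto
  have ident: "deriv h w * (1 / (h w - 0)) = 1/(w - r) + Z/(Z*w + \<beta>) - 1/(w - 0)"
    if "w \<in> path_image \<gamma>" for w
  proof -
    have a: "w \<noteq> 0" "w - r \<noteq> 0" "Z*w + \<beta> \<noteq> 0" using w0[OF that] wr[OF that] zb[OF that] by auto
    have hw: "h w = (w - r) * (Z * w + \<beta>) / w" using fac[OF a(1)] a(1) by (simp add: field_simps)
    define Pp where "Pp = (w - r) * (Z * w + \<beta>)"
    have Pp0: "Pp \<noteq> 0" using a by (simp add: Pp_def)
    have L: "deriv h w * (1 / (h w - 0)) = (Z*w*w - Y) / (w * Pp)"
      unfolding der[OF a(1)] hw Pp_def[symmetric] using a(1) Pp0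
      by (simp add: field_simps power2_eq_square)
    have R: "1/(w - r) + Z/(Z*w + \<beta>) - 1/(w - 0) = (w*(Z*w + \<beta>) + Z*w*(w - r) - (w - r)*(Z*w + \<beta>)) / (w * Pp)"
      unfolding Pp_def using frac3[OF a(1) a(2) a(3), of Z] by (simp add: algebra_simps)
    have N: "w*(Z*w + \<beta>) + Z*w*(w - r) - (w - r)*(Z*w + \<beta>) = Z*w*w - Y"
      by (simp add: Yr \<beta>_def algebra_simps)
    show ?thesis unfolding L R N ..
  qed
  have rin: "r \<notin> path_image \<gamma>" using wr by auto
  have zin: "0 \<notin> path_image \<gamma>" using w0 by auto
  have I1: "((\<lambda>w. 1/(w - r)) has_contour_integral (2*pi*\<i>*winding_number \<gamma> r)) \<gamma>"
    by (rule has_contour_integral_winding_number[OF vp rin])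
  have I0: "((\<lambda>w. 1/(w - 0)) has_contour_integral (2*pi*\<i>*winding_number \<gamma> 0)) \<gamma>"
    by (rule has_contour_integral_winding_number[OF vp zin])
  have wr1: "winding_number \<gamma> r = 1" unfolding \<gamma>_def by (rule winding_number_circlepath) (use r1 in simp)
  have w01: "winding_number \<gamma> 0 = 1" unfolding \<gamma>_def by (rule winding_number_circlepath_centre) simp
  obtain ns where ns: "((\<lambda>w. Z/(Z*w + \<beta>)) has_contour_integral (2*pi*\<i>*ns)) \<gamma>" "Re ns \<ge> 0"
  proof (cases "Z = 0")
    case True
    have "((\<lambda>w. 0) has_contour_integral 0) \<gamma>" by (rule has_contour_integral_0)
    hence "((\<lambda>w. Z/(Z*w + \<beta>)) has_contour_integral (2*pi*\<i>*0)) \<gamma>" using True by simp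
    thus ?thesis using that by fastforce
  next
    case False
    define s where "s = - \<beta> / Z"
    have sin: "s \<notin> path_image \<gamma>"
    proof
      assume "s \<in> path_image \<gamma>"
      from zb[OF this] False show False by (simp add: s_def)
    qed
    have "((\<lambda>w. 1/(w - s)) has_contour_integral (2*pi*\<i>*winding_number \<gamma> s)) \<gamma>"
      by (rule has_contour_integral_winding_number[OF vp sin])
    hence "((\<lambda>w. Z/(Z*w + \<beta>)) has_contour_integral (2*pi*\<i>*winding_number \<gamma> s)) \<gamma>"
    proof (rule has_contour_integral_eq)
      fix w assume "w \<in> path_image \<gamma>"
      show "1/(w - s) = Z/(Z*w + \<beta>)" using False zb[OF \<open>w \<in> path_image \<gamma>\<close>]
        by (simp add: s_def field_simps)
    qed
    moreover have "Re (winding_number \<gamma> s) \<ge> 0"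
    proof (cases "cmod s < 1")
      case True
      hence "winding_number \<gamma> s = 1" unfolding \<gamma>_def by (intro winding_number_circlepath) simp
      thus ?thesis by simp
    next
      case False
      hence "s \<notin> cball 0 1" using sin pi\<gamma> by (auto simp: dist_norm)
      hence "winding_number \<gamma> s = 0"
        by (intro winding_number_zero_outside[of _ "cball 0 1"]) (auto simp: \<gamma>_def pi\<gamma>)
      thus ?thesis by simp
    qed
    ultimately show ?thesis using that by blast
  qed
  have Itot: "((\<lambda>w. 1/(w - r) + Z/(Z*w + \<beta>) - 1/(w - 0)) has_contour_integral
               (2*pi*\<i>*ns)) \<gamma>"
  proof -
    have "((\<lambda>w. 1/(w - r) + Z/(Z*w + \<beta>) - 1/(w - 0)) has_contour_integral
               (2*pi*\<i>*winding_number \<gamma> r + 2*pi*\<i>*ns - 2*pi*\<i>*winding_number \<gamma> 0)) \<gamma>"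
      by (rule has_contour_integral_diff[OF has_contour_integral_add[OF I1 ns(1)] I0])
    moreover have "2*pi*\<i>*winding_number \<gamma> r + 2*pi*\<i>*ns - 2*pi*\<i>*winding_number \<gamma> 0 = 2*pi*\<i>*ns"
      by (simp add: wr1 w01)
    ultimately show ?thesis by simp
  qed
  have "((\<lambda>w. deriv h w * (1 / (h w - 0))) has_contour_integral (2*pi*\<i>*ns)) \<gamma>"
    by (rule has_contour_integral_eq[OF Itot]) (use ident in auto)
  hence ci: "contour_integral \<gamma> (\<lambda>w. deriv h w * (1 / (h w - 0))) = 2*pi*\<i>*ns"
    by (rule contour_integral_unique)
  have "winding_number (h \<circ> \<gamma>) 0 = 1/(2*pi*\<i>) * contour_integral (h \<circ> \<gamma>) (\<lambda>w. 1/(w - 0))"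
    by (rule winding_number_valid_path[OF vph n0])
  also have "contour_integral (h \<circ> \<gamma>) (\<lambda>w. 1/(w - 0)) = contour_integral \<gamma> (\<lambda>w. deriv h w * (1 / (h w - 0)))"
    by (rule contour_integral_comp_analyticW[OF ana vp sub])
  also have "\<dots> = 2*pi*\<i>*ns" by (rule ci)
  finally have "winding_number (h \<circ> \<gamma>) 0 = ns" by (simp add: o_def)
  thus ?thesis using eqf ns(2) by simp
qed




lemma sum_delta_mult:
  assumes "finite S"
  shows "(\<Sum>j\<in>S. (if j = t then x else 0) * f j) = (if t \<in> S then x * f t else (0::complex))"
proof -
  have "(\<Sum>j\<in>S. (if j = t then x else 0) * f j) = (\<Sum>j\<in>S. if t = j then x * f t else 0)"
    by (rule sum.cong) auto
  also have "\<dots> = (if t \<in> S then x * f t else 0)" using assms by (simp add: sum.delta)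
  finally show ?thesis .
qed

context tp begin

abbreviation "F z \<equiv> symbol_mat k a b c z - lam \<cdot>\<^sub>m 1\<^sub>m k"

lemma F_carrier: "F z \<in> carrier_mat k k"
  by (auto simp: symbol_mat_def)

lemma F_idx:
  assumes "i < k" "j < k"
  shows "F z $$ (i,j) = (if j = i then a (i+1) - lam else 0) + (if j = i+1 then b (i+1) else 0)
     + (if j = i - 1 then (if 0 < i then c i else 0) else 0)
     + (if j = 0 then (if i = k-1 then b k / z else 0) else 0)
     + (if j = k-1 then (if i = 0 then c k * z else 0) else 0)"
  using assms by (auto simp: symbol_mat_def)

definition "R z v i = (a (i+1) - lam) * v i + (if i + 1 < k then b (i+1) * v (i+1) else 0)
   + (if 0 < i then c i else 0) * v (i - 1) + (if i = k-1 then b k / z else 0) * v 0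
   + (if i = 0 then c k * z else 0) * v (k - 1)"

lemma F_row:
  assumes i: "i < k"
  shows "(F z *\<^sub>v vec k v) $ i = R z v i"
proof -
  define M where "M = F z"
  have Mc: "M \<in> carrier_mat k k" unfolding M_def by (rule F_carrier)
  have "(M *\<^sub>v vec k v) $ i = row M i \<bullet> vec k v"
    by (rule index_mult_mat_vec) (use Mc i in auto)
  also have "\<dots> = (\<Sum>j\<in>{0..<k}. row M i $ j * vec k v $ j)" by (simp add: scalar_prod_def)
  also have "\<dots> = (\<Sum>j\<in>{0..<k}. M $$ (i,j) * v j)"
    by (rule sum.cong) (use Mc i in auto)
  also have "\<dots> = (\<Sum>j\<in>{0..<k}. (if j = i then a (i+1) - lam else 0) * v j
     + (if j = i+1 then b (i+1) else 0) * v j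
     + (if j = i - 1 then (if 0 < i then c i else 0) else 0) * v j
     + (if j = 0 then (if i = k-1 then b k / z else 0) else 0) * v j
     + (if j = k-1 then (if i = 0 then c k * z else 0) else 0) * v j)"
  proof (rule sum.cong[OF refl])
    fix j assume "j \<in> {0..<k}"
    hence j: "j < k" by simp
    show "M $$ (i,j) * v j = (if j = i then a (i+1) - lam else 0) * v j
     + (if j = i+1 then b (i+1) else 0) * v j
     + (if j = i - 1 then (if 0 < i then c i else 0) else 0) * v j
     + (if j = 0 then (if i = k-1 then b k / z else 0) else 0) * v j
     + (if j = k-1 then (if i = 0 then c k * z else 0) else 0) * v j"
      unfolding M_def F_idx[OF i j] by (simp only: distrib_right)
  qed
  also have "\<dots> = R z v i"
    using i k1 by (simp add: sum.distrib sum_delta_mult R_def)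
  finally show ?thesis by (simp add: M_def)
qed

lemma P_ki: "i < k \<Longrightarrow> P (k + i) = Suc i"
  by (simp add: period_index_def)

lemma bloch_R:
  assumes sh: "\<And>n. \<psi> (n + k) = w * \<psi> n" and w0: "w \<noteq> 0" and i: "i < k"
  shows "Aop \<psi> (k + i) = w * R (1/w) \<psi> i"
proof -
  have ki: "Suc (k + i - 1) = k + i" using k1 by simp
  have e1: "\<psi> (k + i) = w * \<psi> i" using sh[of i] by (simp add: add.commute)
  have e2: "\<psi> (Suc (k + i)) = w * \<psi> (Suc i)" using sh[of "Suc i"] by (simp add: add.commute)
  have A0: "Aop \<psi> (k + i) = c (P (k + i - 1)) * \<psi> (k + i - 1) + (a (P (k + i)) - lam) * \<psi> (k + i)
      + b (P (k + i)) * \<psi> (Suc (k + i))"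
    using Aop_Suc[of \<psi> "k + i - 1"] unfolding ki .
  have A: "Aop \<psi> (k + i) = c (P (k + i - 1)) * \<psi> (k + i - 1) + (a (Suc i) - lam) * (w * \<psi> i)
      + b (P (k + i)) * (w * \<psi> (Suc i))"
    unfolding A0 e1 e2 P_ki[OF i] ..
  show ?thesis
  proof (cases "i = 0")
    case True
    have Pk: "P (k - 1) = k" using k1 by (simp add: period_index_def)
    show ?thesis
    proof (cases "k = 1")
      case True
      have "\<psi> 1 = w * \<psi> 0" using sh[of 0] True by simp
      show ?thesis unfolding A R_def using \<open>i = 0\<close> True Pk w0 \<open>\<psi> 1 = w * \<psi> 0\<close>
        by (simp add: P_ki period_index_def field_simps)
    next
      case False
      have "P k = 1" by (simp add: period_index_def)
      show ?thesis unfolding A R_def using \<open>i = 0\<close> False Pk k1 w0 \<open>P k = 1\<close>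
        by (simp add: P_ki field_simps)
    qed
  next
    case False
    have ki1: "k + i - 1 = (i - 1) + k" using False by simp
    have "(k + i - 1) mod k = ((i - 1) + k) mod k" by (simp only: ki1)
    also have "\<dots> = (i - 1) mod k" by (simp only: mod_add_self2)
    also have "\<dots> = i - 1" using i by simp
    finally have "(k + i - 1) mod k = i - 1" .
    hence Pi: "P (k + i - 1) = i" using False by (simp add: period_index_def)
    have e3: "\<psi> (k + i - 1) = w * \<psi> (i - 1)" using sh[of "i - 1"] False by (simp add: add.commute)
    show ?thesis
    proof (cases "i + 1 < k")
      case True
      show ?thesis unfolding A R_def using True Pi e3 False w0 P_ki[OF i]
        by (simp add: algebra_simps)
    next
      case nt: False
      hence ik: "Suc i = k" using i by simp
      have "\<psi> (Suc i) = w * \<psi> 0" using sh[of 0] ik by simp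
      show ?thesis unfolding A R_def using \<open>\<psi> (Suc i) = w * \<psi> 0\<close> Pi e3 False ik w0 P_ki[OF i]
        by (simp add: field_simps)
    qed
  qed
qed

lemma Aop_period:
  assumes sh: "\<And>n. \<psi> (n + k) = w * \<psi> n"
  shows "Aop \<psi> (Suc m + k) = w * Aop \<psi> (Suc m)"
proof -
  have "Aop \<psi> (Suc m + k) = Aop \<psi> (Suc (m + k))" by simp
  also have "\<dots> = c (P m) * \<psi> (m + k) + (a (P (Suc m)) - lam) * \<psi> (Suc m + k) + b (P (Suc m)) * \<psi> (Suc (Suc m) + k)"
    unfolding Aop_Suc using P_add[of k m] P_add[of k "Suc m"] by simp
  also have "\<dots> = w * Aop \<psi> (Suc m)" unfolding Aop_Suc sh by (simp add: algebra_simps)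
  finally show ?thesis .
qed

lemma bloch_rows:
  assumes sh: "\<And>n. \<psi> (n + k) = w * \<psi> n" and w0: "w \<noteq> 0" and Rz: "\<And>i. i < k \<Longrightarrow> R (1/w) \<psi> i = 0"
  shows "Aop \<psi> (Suc n) = 0"
proof -
  have "1 \<le> j \<Longrightarrow> Aop \<psi> j = 0" for j
  proof (induction j rule: less_induct)
    case (less j)
    show ?case
    proof (cases "j < k")
      case True
      obtain m where jm: "j = Suc m" using less.prems by (cases j) auto
      have "w * Aop \<psi> j = Aop \<psi> (k + j)" using Aop_period[of \<psi> w m, OF sh] jm by (simp add: add.commute)
      also have "\<dots> = 0" using bloch_R[of \<psi> w, OF sh w0 True] Rz[OF True] by simp
      finally show ?thesis using w0 by simp
    next
      case False
      define i where "i = j - k"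
      have ji: "j = k + i" using False by (simp add: i_def)
      show ?thesis
      proof (cases "i < k")
        case True
        thus ?thesis using bloch_R[of \<psi> w, OF sh w0 True] Rz[OF True] ji by simp
      next
        case False
        then obtain m where im: "i = Suc m" using k1 by (cases i) auto
        have "i < j" using ji k1 by simp
        hence "Aop \<psi> i = 0" using less.IH[of i] im by simp
        thus ?thesis using Aop_period[of \<psi> w m, OF sh] im ji by (simp add: add.commute)
      qed
    qed
  qed
  thus ?thesis by simp
qed

lemma det_zero_eig:
  assumes z0: "z \<noteq> 0" and d: "Determinant.det (F z) = 0"
  shows "\<exists>p q. (p \<noteq> 0 \<or> q \<noteq> 0) \<and> m11*p + m12*q = (1/z)*p \<and> m21*p + m22*q = (1/z)*q"
proof -
  obtain v where v: "v \<in> carrier_vec k" "v \<noteq> 0\<^sub>v k" "F z *\<^sub>v v = 0\<^sub>v k"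
    using d det_0_iff_vec_prod_zero[OF F_carrier[of z]] by blast
  define w where "w = 1/z"
  have w0: "w \<noteq> 0" using z0 by (simp add: w_def)
  define \<psi> where "\<psi> n = w ^ (n div k) * v $ (n mod k)" for n
  have sh: "\<psi> (n + k) = w * \<psi> n" for n
    using k1 by (simp add: \<psi>_def)
  have \<psi>v: "\<psi> j = v $ j" if "j < k" for j using that by (simp add: \<psi>_def)
  have vv: "vec k \<psi> = v" using v(1) by (intro eq_vecI) (auto simp: \<psi>v)
  have zw: "1/w = z" by (simp add: w_def)
  have Rz: "R (1/w) \<psi> i = 0" if "i < k" for i
  proof -
    have "R (1/w) \<psi> i = (F z *\<^sub>v vec k \<psi>) $ i" by (simp add: zw F_row[OF that])
    also have "\<dots> = 0" using v(3) that by (simp add: vv)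
    finally show ?thesis .
  qed
  have rows: "Aop \<psi> (Suc n) = 0" for n by (rule bloch_rows[OF sh w0 Rz])
  have "ktoeplitz k a b c \<psi> (Suc n) = lam * \<psi> (Suc n)" for n using rows[of n] by (simp add: Aop_def)
  hence \<psi>s: "sol (\<psi> 0) (\<psi> 1) n = \<psi> n" for n by (rule sol_unique)
  define p where "p = \<psi> 0"
  define q where "q = \<psi> 1"
  have "m11*p + m12*q = sol p q k" by (simp add: sol_lin[of p q k] m11_def m12_def mult.commute)
  also have "\<dots> = \<psi> (0 + k)" using \<psi>s[of k] by (simp add: p_def q_def)
  also have "\<dots> = w * p" using sh[of 0] by (simp add: p_def)
  finally have E1: "m11*p + m12*q = (1/z) * p" by (simp add: w_def)
  have "m21*p + m22*q = sol p q (Suc k)" by (simp add: sol_lin[of p q "Suc k"] m21_def m22_def mult.commute)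
  also have "\<dots> = \<psi> (1 + k)" using \<psi>s[of "Suc k"] by (simp add: p_def q_def)
  also have "\<dots> = w * q" by (simp only: sh q_def)
  finally have E2: "m21*p + m22*q = (1/z) * q" by (simp add: w_def)
  have "p \<noteq> 0 \<or> q \<noteq> 0"
  proof (rule ccontr)
    assume "\<not> (p \<noteq> 0 \<or> q \<noteq> 0)"
    hence "\<psi> n = 0" for n using \<psi>s[of n] sol_lin[of 0 0 n] by (simp add: p_def q_def)
    hence "v = 0\<^sub>v k" using vv by (auto intro!: eq_vecI)
    with v(2) show False by simp
  qed
  with E1 E2 show ?thesis by blast
qed

lemma eig_det_zero:
  assumes \<mu>0: "\<mu> \<noteq> 0" and pq: "p \<noteq> 0 \<or> q \<noteq> 0" and e1: "m11*p + m12*q = \<mu>*p" and e2: "m21*p + m22*q = \<mu>*q"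
  shows "Determinant.det (F (1/\<mu>)) = 0"
proof -
  define \<psi> where "\<psi> = sol p q"
  have sh: "\<psi> (n + k) = \<mu> * \<psi> n" for n unfolding \<psi>_def by (rule bloch_shift[OF e1 e2])
  have Rz: "R (1/\<mu>) \<psi> i = 0" if "i < k" for i
  proof -
    have ki: "Suc (k + i - 1) = k + i" using k1 by simp
    have "Aop \<psi> (k + i) = 0" using sol_Aop[of p q "k + i - 1"] unfolding ki \<psi>_def .
    thus ?thesis using bloch_R[of \<psi> \<mu>, OF sh \<mu>0 that] \<mu>0 by simp
  qed
  have prod0: "F (1/\<mu>) *\<^sub>v vec k \<psi> = 0\<^sub>v k"
  proof (rule eq_vecI)
    fix i assume "i < dim_vec (0\<^sub>v k)"
    hence i: "i < k" by simp
    show "(F (1/\<mu>) *\<^sub>v vec k \<psi>) $ i = 0\<^sub>v k $ i"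
      using i by (simp only: F_row[OF i] Rz[OF i]) simp
  next
    show "dim_vec (F (1/\<mu>) *\<^sub>v vec k \<psi>) = dim_vec (0\<^sub>v k)" using F_carrier[of "1/\<mu>"] by simp
  qed
  obtain r0 where r0: "r0 < k" "\<psi> r0 \<noteq> 0"
  proof (cases "p = 0")
    case False then show ?thesis using that[of 0] k1 by (simp add: \<psi>_def)
  next
    case True
    hence q: "q \<noteq> 0" using pq by simp
    have "k \<noteq> 1"
    proof
      assume "k = 1"
      hence "\<psi> 1 = \<mu> * \<psi> 0" using sh[of 0] by simp
      thus False using True q by (simp add: \<psi>_def)
    qed
    hence "1 < k" using k1 by simp
    then show ?thesis using that[of 1] q by (simp add: \<psi>_def)
  qed
  have "vec k \<psi> \<noteq> 0\<^sub>v k"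
  proof
    assume "vec k \<psi> = 0\<^sub>v k"
    hence "vec k \<psi> $ r0 = 0\<^sub>v k $ r0" by simp
    with r0 show False by simp
  qed
  moreover have "vec k \<psi> \<in> carrier_vec k" by simp
  ultimately show ?thesis using det_0_iff_vec_prod_zero[OF F_carrier[of "1/\<mu>"]] prod0 by blast
qed

end



definition lform :: "(complex \<Rightarrow> complex) \<Rightarrow> bool" where
  "lform f \<longleftrightarrow> (\<exists>X Y Z. \<forall>z. z \<noteq> 0 \<longrightarrow> f z = X + Y/z + Z*z)"

lemma lform_sum:
  assumes "finite S" "\<And>s. s \<in> S \<Longrightarrow> lform (f s)"
  shows "lform (\<lambda>z. \<Sum>s\<in>S. f s z)"
  using assms
proof (induction S rule: finite_induct)
  case empty
  show ?case unfolding lform_def by (intro exI[of _ 0]) simp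
next
  case (insert x S)
  obtain X Y Z where 1: "\<forall>z. z \<noteq> 0 \<longrightarrow> f x z = X + Y/z + Z*z"
    using insert.prems[of x] by (auto simp: lform_def)
  obtain X' Y' Z' where 2: "\<forall>z. z \<noteq> 0 \<longrightarrow> (\<Sum>s\<in>S. f s z) = X' + Y'/z + Z'*z"
    using insert.IH insert.prems by (auto simp: lform_def)
  show ?case unfolding lform_def
    by (rule exI[of _ "X + X'"], rule exI[of _ "Y + Y'"], rule exI[of _ "Z + Z'"])
       (use 1 2 insert.hyps in \<open>auto simp: add_divide_distrib algebra_simps\<close>)
qed

lemma lform_cmult: "lform f \<Longrightarrow> lform (\<lambda>z. C * f z)"
  unfolding lform_def
  by (elim exE, rule_tac x = "C * X" in exI, rule_tac x = "C * Y" in exI, rule_tac x = "C * Z" in exI)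
     (auto simp: algebra_simps)

lemma lform_two: "lform (\<lambda>z. (A0 + C0*z) * (A1 + B1/z) * Q)"
  unfolding lform_def
  by (rule exI[of _ "(A0*A1 + C0*B1)*Q"], rule exI[of _ "A0*B1*Q"], rule exI[of _ "C0*A1*Q"])
     (auto simp: field_simps)

context tp begin

lemma prod_form:
  assumes p: "p permutes {0..<k}"
  shows "lform (\<lambda>z. \<Prod>i = 0..<k. F z $$ (i, p i))"
proof (cases "k = 1")
  case True
  have "p 0 \<in> {0..<k}" using permutes_in_image[OF p, of 0] k1 by simp
  hence p0: "p 0 = 0" using True by simp
  have "(\<Prod>i = 0..<k. F z $$ (i, p i)) = (a 1 - lam) + b 1 / z + c 1 * z" for z
    using True p0 F_idx[of 0 0 z] by simp
  thus ?thesis unfolding lform_def by blast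
next
  case False
  hence k2: "k \<ge> 2" using k1 by simp
  have pin: "p i < k" if "i < k" for i using permutes_in_image[OF p, of i] that by simp
  have split: "{0..<k} = insert 0 (insert (k-1) {1..<k-1})" using k2 by auto
  have n1: "0 \<notin> insert (k-1) {1..<k-1}" using k2 by auto
  have n2: "k - 1 \<notin> {1..<k-1}" by auto
  define al where "al i j = (if j = i then a (i+1) - lam else 0) + (if j = i+1 then b (i+1) else 0)
     + (if j = i - 1 then (if 0 < i then c i else 0) else 0)" for i j
  define Q where "Q = (\<Prod>i\<in>{1..<k-1}. al i (p i))"
  have Qe: "(\<Prod>i\<in>{1..<k-1}. F z $$ (i, p i)) = Q" for z
    unfolding Q_def
  proof (rule prod.cong[OF refl])
    fix i assume i: "i \<in> {1..<k-1}"
    hence ik: "i < k" "i \<noteq> 0" "i \<noteq> k - 1" by auto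
    show "F z $$ (i, p i) = al i (p i)" using F_idx[OF ik(1) pin[OF ik(1)], of z] ik by (simp add: al_def)
  qed
  have k0: "0 < k" "k - 1 < k" "k - 1 \<noteq> 0" using k2 by auto
  have E0: "F z $$ (0, p 0) = al 0 (p 0) + (if p 0 = k - 1 then c k else 0) * z" for z
    using F_idx[OF k0(1) pin[OF k0(1)], of z] k0 by (simp add: al_def)
  have E1: "F z $$ (k-1, p (k-1)) = al (k-1) (p (k-1)) + (if p (k-1) = 0 then b k else 0) / z" for z
    using F_idx[OF k0(2) pin[OF k0(2)], of z] k0 by (simp add: al_def)
  have "(\<Prod>i = 0..<k. F z $$ (i, p i)) =
        (al 0 (p 0) + (if p 0 = k - 1 then c k else 0) * z) *
        (al (k-1) (p (k-1)) + (if p (k-1) = 0 then b k else 0) / z) * Q" for z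
    unfolding split prod.insert[OF finite_insert[THEN iffD2, OF finite_atLeastLessThan] n1]
      prod.insert[OF finite_atLeastLessThan n2] Qe E0 E1 by (simp add: mult.assoc)
  thus ?thesis using lform_two by simp
qed

lemma det_form: "\<exists>X Y Z. \<forall>z. z \<noteq> 0 \<longrightarrow> Determinant.det (F z) = X + Y/z + Z*z"
proof -
  have "lform (\<lambda>z. \<Sum>p\<in>{p. p permutes {0..<k}}. signof p * (\<Prod>i = 0..<k. F z $$ (i, p i)))"
    by (intro lform_sum lform_cmult prod_form) (auto simp: finite_permutations)
  moreover have "Determinant.det (F z) = (\<Sum>p\<in>{p. p permutes {0..<k}}. signof p * (\<Prod>i = 0..<k. F z $$ (i, p i)))" for z
    by (rule det_def'[OF F_carrier])
  ultimately show ?thesis unfolding lform_def by simp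
qed

lemma wind_nonneg:
  assumes trd: "tr = \<mu>1 + \<mu>2" "dt = \<mu>1 * \<mu>2" and n1: "cmod \<mu>1 \<noteq> 1" "cmod \<mu>2 \<noteq> 1" and big: "cmod \<mu>1 > 1"
  shows "Re (total_winding k a b c lam) \<ge> 0"
proof -
  obtain X Y Z where form: "\<forall>z. z \<noteq> 0 \<longrightarrow> Determinant.det (F z) = X + Y/z + Z*z"
    using det_form by blast
  have nz: "Determinant.det (F z) \<noteq> 0" if "cmod z = 1" for z
  proof
    assume d: "Determinant.det (F z) = 0"
    have z0: "z \<noteq> 0" using that by auto
    obtain p q where "p \<noteq> 0 \<or> q \<noteq> 0" "m11*p + m12*q = (1/z)*p" "m21*p + m22*q = (1/z)*q"
      using det_zero_eig[OF z0 d] by blast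
    hence r: "(1/z)*(1/z) - tr*(1/z) + dt = 0" by (rule eig_root)
    have "(1/z - \<mu>1) * (1/z - \<mu>2) = (1/z)*(1/z) - tr*(1/z) + dt" by (simp add: trd algebra_simps add_divide_distrib)
    hence "(1/z - \<mu>1) * (1/z - \<mu>2) = 0" using r by simp
    hence "1/z = \<mu>1 \<or> 1/z = \<mu>2" by simp
    moreover have "cmod (1/z) = 1" using that by (simp add: norm_divide)
    ultimately show False using n1 by auto
  qed
  have \<mu>0: "\<mu>1 \<noteq> 0" using big by auto
  have "\<mu>1*\<mu>1 - tr*\<mu>1 + dt = 0" using trd by (simp add: algebra_simps)
  then obtain p q where pq: "p \<noteq> 0 \<or> q \<noteq> 0" "m11*p + m12*q = \<mu>1*p" "m21*p + m22*q = \<mu>1*q"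
    using eigvec by blast
  have Gr: "Determinant.det (F (1/\<mu>1)) = 0" by (rule eig_det_zero[OF \<mu>0 pq])
  have r1: "cmod (1/\<mu>1) < 1" using big by (simp add: norm_divide divide_less_eq)
  have "Re (winding_number (\<lambda>t. Determinant.det (F (cis (2*pi*t)))) 0) \<ge> 0"
    by (rule wind_lemma[where G = "\<lambda>z. Determinant.det (F z)" and r = "1/\<mu>1"])
       (use form nz \<mu>0 r1 Gr in auto)
  thus ?thesis by (simp add: total_winding_def)
qed

end

theorem theorem2p9:
  fixes k :: nat and a b c :: "nat \<Rightarrow> complex" and lam :: complex
  assumes "k \<ge> 1"
    and "(\<Prod>j=1..k. c j) \<noteq> 0"
    and "(\<Prod>j=1..k. b j) \<noteq> 0"
    and "lam \<notin> ess_spectrum_ktoeplitz k a b c"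
    and "Re (total_winding k a b c lam) < 0"
  shows "\<exists>C>0. \<exists>x \<rho>. is_l2 x \<and> x \<noteq> (\<lambda>_. 0) \<and> ktoeplitz k a b c x = (\<lambda>n. lam * x n) \<and>
           0 \<le> \<rho> \<and> \<rho> < 1 \<and>
           (\<forall>j::nat. j \<ge> 1 \<longrightarrow>
              cmod (x (j - 1)) / (SUP i. cmod (x i))
                \<le> C * real_of_int \<lceil>real j / real k\<rceil> * \<rho> ^ (nat \<lceil>real j / real k\<rceil> - 1))"
proof -
  have bnz: "b j \<noteq> 0" if "1 \<le> j" "j \<le> k" for j
    using assms(3) that by (auto simp: prod_zero_iff)
  interpret tp k a b c lam by unfold_locales (use assms(1) bnz in auto)
  obtain \<mu>1 \<mu>2 where trd: "tr = \<mu>1 + \<mu>2" "dt = \<mu>1 * \<mu>2" using roots_exist by blast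
  have ess: "fredholm_l2 Aop" using assms(4) ess_iff by simp
  have n1: "cmod \<mu>1 \<noteq> 1"
  proof
    assume "cmod \<mu>1 = 1"
    from nonfred[OF trd this] ess show False by simp
  qed
  have n2: "cmod \<mu>2 \<noteq> 1"
  proof
    assume "cmod \<mu>2 = 1"
    from nonfred[of \<mu>2 \<mu>1, OF _ _ this] trd ess show False by (simp add: algebra_simps)
  qed
  have s1: "\<not> cmod \<mu>1 > 1"
  proof
    assume "cmod \<mu>1 > 1"
    from wind_nonneg[OF trd n1 n2 this] assms(5) show False by simp
  qed
  have s2: "\<not> cmod \<mu>2 > 1"
  proof
    assume "cmod \<mu>2 > 1"
    have "tr = \<mu>2 + \<mu>1" "dt = \<mu>2 * \<mu>1" using trd by (simp_all add: algebra_simps)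
    from wind_nonneg[OF this n2 n1 \<open>cmod \<mu>2 > 1\<close>] assms(5) show False by simp
  qed
  have "cmod \<mu>1 < 1" "cmod \<mu>2 < 1" using n1 n2 s1 s2 by linarith+
  from decay[OF trd this] show ?thesis .
qed



end
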